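(* Let $q\in\mathbb{C}_p$ satisfy $|q-1|_p<p^{-1/(p-1)}$ and $q\neq 1$, and let $f\in UD(\mathbb{Z}_p,\mathbb{C}_p)$. Then for every $x\in\mathbb{Z}_p$, $$ f(x)\,q^x=\frac{\log q}{q-1}\sum_{w}\phi_{w^{-1}}(x)\,(\hat f_w)_q ,$$ where $\sum_w$ means $\lim_{n\to\infty}\sum_{w\in C_{p^n}}$.
   Context: $p$ is a prime, $\mathbb{C}_p$ is the completion of an algebraic closure of $\mathbb{Q}_p$. The element $q\in\mathbb{C}_p$ satisfies $|q-1|_p<p^{-1/(p-1)}$, and $q^x=\exp(x\log q)$ for $x\in\mathbb{Z}_p$; $[x]=[x;q]=\frac{1-q^x}{1-q}$. $UD(\mathbb{Z}_p,\mathbb{C}_p)$ is the space of uniformly differentiable functions $\mathbb{Z}_p\to\mathbb{C}_p$. The $p$-adic $q$-integral is $I_q(f)=\int_{\mathbb{Z}_p}f(x)\,d\mu_q(x)=\lim_{N\to\infty}\frac{1}{[p^N]}\sum_{x=0}^{p^N-1}f(x)q^x$. $C_{p^n}$ is the group of $p^n$-th roots of unity in $\mathbb{C}_p$ and $T_p=\bigcup_{n\ge 1}C_{p^n}$. For $\alpha\in T_p$ (or more generally $\alpha$ a principal unit of $\mathbb{C}_p$) let $\phi_\alpha(x)=\alpha^x$. The $I_q$-Fourier transform of $f$ at $w$ is $(\hat f_w)_q=I_q(\phi_w f)=\int_{\mathbb{Z}_p}w^x f(x)\,d\mu_q(x)$. *)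

theory Defs
  imports Complex_Main "HOL-Computational_Algebra.Computational_Algebra"
begin

text \<open>We model C_p abstractly: a field K with an
absolute value v that is non-archimedean, restricts to the p-adic absolute value on the
integers (hence on Q), is complete, and K is algebraically closed. C_p is such a field.\<close>

definition nonarch_abs :: "('a::field \<Rightarrow> real) \<Rightarrow> bool" where
  "nonarch_abs v \<longleftrightarrow> (\<forall>x. 0 \<le> v x) \<and> (\<forall>x. v x = 0 \<longleftrightarrow> x = 0)
     \<and> (\<forall>x y. v (x * y) = v x * v y) \<and> (\<forall>x y. v (x + y) \<le> max (v x) (v y))"

definition vconv :: "('a::field \<Rightarrow> real) \<Rightarrow> (nat \<Rightarrow> 'a) \<Rightarrow> 'a \<Rightarrow> bool" where
  "vconv v s L \<longleftrightarrow> ((\<lambda>n. v (s n - L)) \<longlonglongrightarrow> 0)"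

definition vlim :: "('a::field \<Rightarrow> real) \<Rightarrow> (nat \<Rightarrow> 'a) \<Rightarrow> 'a" where
  "vlim v s = (THE L. vconv v s L)"

definition vcomplete :: "('a::field \<Rightarrow> real) \<Rightarrow> bool" where
  "vcomplete v \<longleftrightarrow> (\<forall>s::nat \<Rightarrow> 'a.
     (\<forall>e>0. \<exists>N. \<forall>m\<ge>N. \<forall>n\<ge>N. v (s m - s n) < e) \<longrightarrow> (\<exists>L. vconv v s L))"

definition alg_closed :: "'a::field itself \<Rightarrow> bool" where
  "alg_closed _ \<longleftrightarrow> (\<forall>P::'a poly. 0 < degree P \<longrightarrow> (\<exists>x. poly P x = 0))"

definition Cp_field :: "nat \<Rightarrow> ('a::field \<Rightarrow> real) \<Rightarrow> bool" where
  "Cp_field p v \<longleftrightarrow> prime p \<and> nonarch_abs v \<and> vcomplete v \<and> alg_closed TYPE('a)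
     \<and> (\<forall>a::int. a \<noteq> 0 \<longrightarrow> v (of_int a) = inverse (real p ^ multiplicity (int p) a))"

text \<open>Z_p inside K: the closure of the integers.\<close>
definition Zp :: "('a::field \<Rightarrow> real) \<Rightarrow> 'a set" where
  "Zp v = {x. \<exists>s::nat \<Rightarrow> int. vconv v (\<lambda>n. of_int (s n)) x}"

definition vsuminf :: "('a::field \<Rightarrow> real) \<Rightarrow> (nat \<Rightarrow> 'a) \<Rightarrow> 'a" where
  "vsuminf v a = vlim v (\<lambda>N. \<Sum>n<N. a n)"

definition plog :: "('a::field \<Rightarrow> real) \<Rightarrow> 'a \<Rightarrow> 'a" where
  "plog v z = vsuminf v (\<lambda>n. (-1) ^ n * (z - 1) ^ Suc n / of_nat (Suc n))"

definition pexp :: "('a::field \<Rightarrow> real) \<Rightarrow> 'a \<Rightarrow> 'a" where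
  "pexp v z = vsuminf v (\<lambda>n. z ^ n / of_nat (fact n))"

definition qpow :: "('a::field \<Rightarrow> real) \<Rightarrow> 'a \<Rightarrow> 'a \<Rightarrow> 'a" where
  "qpow v q x = pexp v (x * plog v q)"

definition qnum :: "('a::field \<Rightarrow> real) \<Rightarrow> 'a \<Rightarrow> 'a \<Rightarrow> 'a" where
  "qnum v q x = (1 - qpow v q x) / (1 - q)"

text \<open>alpha^x for alpha in T_p (or a principal unit) and x in Z_p: the limit of alpha^n
along natural numbers n converging to x (alpha^x = alpha^(x mod p^n) for alpha in C_{p^n}).\<close>
definition upow :: "('a::field \<Rightarrow> real) \<Rightarrow> 'a \<Rightarrow> 'a \<Rightarrow> 'a" where
  "upow v \<alpha> x = (THE L. \<forall>s::nat \<Rightarrow> nat. vconv v (\<lambda>k. of_nat (s k)) x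
                          \<longrightarrow> vconv v (\<lambda>k. \<alpha> ^ s k) L)"

definition UD :: "('a::field \<Rightarrow> real) \<Rightarrow> ('a \<Rightarrow> 'a) \<Rightarrow> bool" where
  "UD v f \<longleftrightarrow> (\<exists>f'. \<forall>e>0. \<exists>d>0. \<forall>a\<in>Zp v. \<forall>x\<in>Zp v. \<forall>y\<in>Zp v.
      x \<noteq> y \<and> v (x - a) < d \<and> v (y - a) < d \<longrightarrow> v ((f x - f y) / (x - y) - f' a) < e)"

definition Iq :: "nat \<Rightarrow> ('a::field \<Rightarrow> real) \<Rightarrow> 'a \<Rightarrow> ('a \<Rightarrow> 'a) \<Rightarrow> 'a" where
  "Iq p v q f = vlim v (\<lambda>N. (\<Sum>x<p ^ N. f (of_nat x) * qpow v q (of_nat x))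
                               / qnum v q (of_nat (p ^ N)))"

definition roots_C :: "nat \<Rightarrow> nat \<Rightarrow> 'a::field set" where
  "roots_C p n = {w. w ^ (p ^ n) = 1}"

definition qfourier :: "nat \<Rightarrow> ('a::field \<Rightarrow> real) \<Rightarrow> 'a \<Rightarrow> ('a \<Rightarrow> 'a) \<Rightarrow> 'a \<Rightarrow> 'a" where
  "qfourier p v q f w = Iq p v q (\<lambda>x. upow v w x * f x)"

end

theory Submission
  imports Defs
begin


locale cpf = fixes p :: nat and v :: "'a::field \<Rightarrow> real"
  assumes cp: "Cp_field p v"
begin

lemma prime_p: "prime p" using cp by (simp add: Cp_field_def)
lemma p_ge2: "p \<ge> 2" using prime_p prime_ge_2_nat by blast
lemma nonarch: "nonarch_abs v" using cp by (simp add: Cp_field_def)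
lemma v_nonneg[simp]: "0 \<le> v x" using nonarch by (simp add: nonarch_abs_def)
lemma v_zero_iff[simp]: "v x = 0 \<longleftrightarrow> x = 0" using nonarch by (simp add: nonarch_abs_def)
lemma v_mult: "v (x * y) = v x * v y" using nonarch by (simp add: nonarch_abs_def)
lemma v_ultra: "v (x + y) \<le> max (v x) (v y)" using nonarch by (simp add: nonarch_abs_def)
lemma v_pos: "x \<noteq> 0 \<Longrightarrow> 0 < v x" using v_nonneg[of x] v_zero_iff[of x] by linarith
lemma v_0[simp]: "v 0 = 0" by simp
lemma v_1[simp]: "v 1 = 1"
proof -
  have "v 1 = v 1 * v 1" using v_mult[of 1 1] by simp
  moreover have "v 1 \<noteq> 0" by simp
  ultimately show ?thesis by (metis mult_cancel_left1)
qed
lemma v_minus1: "v (-1) = 1"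
proof -
  have "v (-1) * v (-1) = 1" using v_mult[of "-1" "-1"] by simp
  then have "(v (-1) - 1) * (v (-1) + 1) = 0" by (simp add: algebra_simps)
  moreover have "v (-1) + 1 > 0" using v_nonneg[of "-1"] by linarith
  ultimately show ?thesis by simp
qed
lemma v_minus[simp]: "v (- x) = v x"
  using v_mult[of "-1" x] v_minus1 by simp
lemma v_commute: "v (x - y) = v (y - x)"
  by (metis minus_diff_eq v_minus)
lemma v_power: "v (x ^ n) = v x ^ n"
  by (induction n) (simp_all add: v_mult)
lemma v_inverse: "v (inverse x) = inverse (v x)"
proof (cases "x = 0")
  case False
  then have "v x * v (inverse x) = 1" using v_mult[of x "inverse x"] by simp
  then show ?thesis using v_pos[OF False] by (metis inverse_unique mult.commute)
qed simp
lemma v_divide: "v (x / y) = v x / v y"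
  by (simp add: divide_inverse v_mult v_inverse)
lemma v_add_le: "v x \<le> c \<Longrightarrow> v y \<le> c \<Longrightarrow> v (x + y) \<le> c"
  using v_ultra[of x y] by linarith
lemma v_add_less: "v x < c \<Longrightarrow> v y < c \<Longrightarrow> v (x + y) < c"
  using v_ultra[of x y] by linarith
lemma v_diff_le: "v x \<le> c \<Longrightarrow> v y \<le> c \<Longrightarrow> v (x - y) \<le> c"
  using v_add_le[of x c "-y"] by simp
lemma v_diff_less: "v x < c \<Longrightarrow> v y < c \<Longrightarrow> v (x - y) < c"
  using v_add_less[of x c "-y"] by simp
lemma v_tri: "v (x - y) \<le> max (v (x - z)) (v (z - y))"
  using v_ultra[of "x - z" "z - y"] by simp
lemma v_sum_le:
  assumes "\<And>i. i \<in> A \<Longrightarrow> v (f i) \<le> c" "0 \<le> c"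
  shows "v (sum f A) \<le> c"
  using assms
proof (induction A rule: infinite_finite_induct)
  case (insert x F) then show ?case by (simp add: v_add_le)
qed simp_all
lemma v_sum_less:
  assumes "\<And>i. i \<in> A \<Longrightarrow> v (f i) < c" "0 < c"
  shows "v (sum f A) < c"
  using assms
proof (induction A rule: infinite_finite_induct)
  case (insert x F) then show ?case by (simp add: v_add_less)
qed simp_all
lemma v_triangle: "v (x + y) \<le> v x + v y"
  using v_ultra[of x y] v_nonneg[of x] v_nonneg[of y] by linarith
lemma v_tri2: "v (x - y) \<le> v (x - z) + v (z - y)"
  using v_triangle[of "x - z" "z - y"] by simp
lemma v_add_eq: assumes "v y < v x" shows "v (x + y) = v x"
proof -
  have "v (x + y) \<le> v x" using v_ultra[of x y] assms by linarith
  moreover have "v x \<le> max (v (x + y)) (v y)" using v_ultra[of "x + y" "-y"] by simp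
  ultimately show ?thesis using assms by linarith
qed
lemma v_of_nat_le1: "v (of_nat n) \<le> 1"
  by (induction n) (simp_all add: v_add_le)
lemma v_of_int_le1: "v (of_int n) \<le> 1"
  by (cases n rule: int_cases) (simp_all add: v_of_nat_le1 del: of_nat_Suc)

lemma v_of_int: "a \<noteq> 0 \<Longrightarrow> v (of_int a) = inverse (real p ^ multiplicity (int p) a)"
  using cp by (simp add: Cp_field_def)
lemma v_of_nat: "a \<noteq> 0 \<Longrightarrow> v (of_nat a) = inverse (real p ^ multiplicity (int p) (int a))"
  using v_of_int[of "int a"] by simp
lemma v_p: "v (of_nat p) = 1 / real p"
proof -
  have "multiplicity (int p) (int p) = 1"
    using prime_p by (simp add: multiplicity_prime prime_nat_iff_prime)
  then show ?thesis using v_of_nat[of p] p_ge2 by (simp add: divide_inverse)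
qed
lemma v_ppow: "v (of_nat (p ^ n)) = (1 / real p) ^ n"
  unfolding of_nat_power v_power v_p ..
lemma v_coprime: "\<not> p dvd k \<Longrightarrow> v (of_nat k) = 1"
proof -
  assume "\<not> p dvd k"
  then have "k \<noteq> 0" by (metis dvd_0_right)
  have "multiplicity (int p) (int k) = 0"
    using \<open>\<not> p dvd k\<close> by (simp add: not_dvd_imp_multiplicity_0)
  then show ?thesis using v_of_nat[OF \<open>k \<noteq> 0\<close>] by simp
qed
lemma v_dvd_imp: "int p ^ m dvd a \<Longrightarrow> v (of_int a) \<le> (1 / real p) ^ m"
proof -
  assume "int p ^ m dvd a"
  then obtain b where "a = int p ^ m * b" by (auto elim: dvdE)
  then have "v (of_int a) = v (of_nat (p ^ m)) * v (of_int b)"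
    by (simp add: v_mult)
  also have "\<dots> = (1 / real p) ^ m * v (of_int b)" by (simp only: v_ppow)
  also have "\<dots> \<le> (1 / real p) ^ m" using v_of_int_le1[of b]
    by (simp add: mult_left_le)
  finally show ?thesis .
qed
lemma v_imp_dvd: assumes "v (of_int a) \<le> (1 / real p) ^ m" shows "int p ^ m dvd a"
proof (cases "a = 0")
  case False
  have "inverse (real p ^ multiplicity (int p) a) \<le> inverse (real p ^ m)"
    using assms v_of_int[OF False] by (simp add: power_one_over divide_inverse power_inverse)
  then have "real p ^ m \<le> real p ^ multiplicity (int p) a"
    using p_ge2 by (simp add: inverse_le_iff_le)
  then have "m \<le> multiplicity (int p) a" using p_ge2 by (simp add: power_increasing_iff)
  then show ?thesis by (rule multiplicity_dvd')
qed simp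

lemma null_cmp:
  fixes f g :: "nat \<Rightarrow> real"
  assumes "\<forall>\<^sub>F n in sequentially. f n \<le> g n" "\<And>n. 0 \<le> f n" "g \<longlonglongrightarrow> 0"
  shows "f \<longlonglongrightarrow> 0"
  by (rule tendsto_sandwich[OF _ assms(1) tendsto_const assms(3)]) (simp add: assms(2))

lemma char0: "of_nat n = (0::'a) \<longleftrightarrow> n = 0"
proof
  assume "of_nat n = (0::'a)"
  show "n = 0"
  proof (rule ccontr)
    assume "n \<noteq> 0"
    then have "v (of_nat n) > 0" using v_of_nat[of n] p_ge2 by simp
    then show False using \<open>of_nat n = 0\<close> by simp
  qed
qed simp

end

context cpf begin

lemma vconv_iff: "vconv v s L \<longleftrightarrow> (\<forall>e>0. \<exists>N. \<forall>n\<ge>N. v (s n - L) < e)"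
  unfolding vconv_def LIMSEQ_iff by simp

lemma vconv_tendsto: "vconv v s L \<longleftrightarrow> ((\<lambda>n. v (s n - L)) \<longlonglongrightarrow> 0)"
  by (simp add: vconv_def)

lemma vconv_unique: assumes "vconv v s L1" "vconv v s L2" shows "L1 = L2"
proof (rule ccontr)
  assume ne: "L1 \<noteq> L2"
  define e where "e = v (L1 - L2)"
  have e: "e > 0" using ne by (simp add: e_def v_pos)
  obtain N1 where N1: "\<forall>n\<ge>N1. v (s n - L1) < e" using assms(1) e by (auto simp: vconv_iff)
  obtain N2 where N2: "\<forall>n\<ge>N2. v (s n - L2) < e" using assms(2) e by (auto simp: vconv_iff)
  define n where "n = max N1 N2"
  have a: "v (s n - L1) < e" "v (s n - L2) < e" using N1 N2 by (simp_all add: n_def)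
  have "v (L1 - L2) \<le> max (v (L1 - s n)) (v (s n - L2))" by (rule v_tri)
  then have "v (L1 - L2) < e" using a v_commute[of L1 "s n"] by (simp add: max_def split: if_splits)
  then show False by (simp add: e_def)
qed

lemma vlim_eq: "vconv v s L \<Longrightarrow> vlim v s = L"
  unfolding vlim_def using vconv_unique by blast

lemma vconv_const: "vconv v (\<lambda>n. c) c" by (simp add: vconv_def)

lemma vconv_comparison:
  assumes "vconv v t L" "(\<lambda>n. v (s n - t n)) \<longlonglongrightarrow> 0"
  shows "vconv v s L"
  unfolding vconv_def
proof (rule null_cmp)
  show "\<forall>\<^sub>F n in sequentially. v (s n - L) \<le> v (s n - t n) + v (t n - L)"
    by (intro always_eventually allI v_tri2)
  show "(\<lambda>n. v (s n - t n) + v (t n - L)) \<longlonglongrightarrow> 0"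
    using assms by (simp add: vconv_def tendsto_add_zero)
qed simp

lemma vconv_eventually:
  assumes "vconv v t L" "\<forall>\<^sub>F n in sequentially. s n = t n"
  shows "vconv v s L"
proof (rule vconv_comparison[OF assms(1)])
  have "\<forall>\<^sub>F n in sequentially. 0 = v (s n - t n)" using assms(2) by eventually_elim simp
  then show "(\<lambda>n. v (s n - t n)) \<longlonglongrightarrow> 0"
    by (rule Lim_transform_eventually[OF tendsto_const])
qed

lemma vconv_add: assumes "vconv v s L" "vconv v t M" shows "vconv v (\<lambda>n. s n + t n) (L + M)"
  unfolding vconv_def
proof (rule null_cmp)
  show "\<forall>\<^sub>F n in sequentially. v (s n + t n - (L + M)) \<le> v (s n - L) + v (t n - M)"
  proof (intro always_eventually allI)
    fix n
    have eq: "s n + t n - (L + M) = (s n - L) + (t n - M)" by simp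
    show "v (s n + t n - (L + M)) \<le> v (s n - L) + v (t n - M)"
      unfolding eq by (rule v_triangle)
  qed
  show "(\<lambda>n. v (s n - L) + v (t n - M)) \<longlonglongrightarrow> 0"
    using assms by (simp add: vconv_def tendsto_add_zero)
qed simp

lemma vconv_minus: assumes "vconv v s L" shows "vconv v (\<lambda>n. - s n) (- L)"
proof -
  have "v (- s n - - L) = v (s n - L)" for n
    using v_minus[of "s n - L"] by (simp add: algebra_simps)
  then show ?thesis using assms unfolding vconv_def by simp
qed

lemma vconv_diff: assumes "vconv v s L" "vconv v t M" shows "vconv v (\<lambda>n. s n - t n) (L - M)"
  using vconv_add[OF assms(1) vconv_minus[OF assms(2)]] by simp

lemma vconv_mult: assumes "vconv v s L" "vconv v t M" shows "vconv v (\<lambda>n. s n * t n) (L * M)"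
  unfolding vconv_def
proof (rule null_cmp)
  show "\<forall>\<^sub>F n in sequentially. v (s n * t n - L * M)
          \<le> v (s n - L) * (v (t n - M) + v M) + v L * v (t n - M)"
  proof (intro always_eventually allI)
    fix n
    have eq: "s n * t n - L * M = (s n - L) * t n + L * (t n - M)" by (simp add: algebra_simps)
    have "v (t n) \<le> v (t n - M) + v M" using v_triangle[of "t n - M" M] by simp
    then have "v ((s n - L) * t n) \<le> v (s n - L) * (v (t n - M) + v M)"
      by (simp add: v_mult mult_left_mono)
    moreover have "v (L * (t n - M)) = v L * v (t n - M)" by (simp add: v_mult)
    moreover have "v ((s n - L) * t n + L * (t n - M)) \<le> v ((s n - L) * t n) + v (L * (t n - M))"
      by (rule v_triangle)
    ultimately show "v (s n * t n - L * M) \<le> v (s n - L) * (v (t n - M) + v M) + v L * v (t n - M)"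
      using eq by simp
  qed
  have "(\<lambda>n. v (s n - L)) \<longlonglongrightarrow> 0" "(\<lambda>n. v (t n - M)) \<longlonglongrightarrow> 0" using assms by (simp_all add: vconv_def)
  then show "(\<lambda>n. v (s n - L) * (v (t n - M) + v M) + v L * v (t n - M)) \<longlonglongrightarrow> 0"
    by (auto intro!: tendsto_eq_intros)
qed simp

lemma vconv_cmult: "vconv v s L \<Longrightarrow> vconv v (\<lambda>n. c * s n) (c * L)"
  using vconv_mult[OF vconv_const] by blast

lemma vconv_sum: "finite A \<Longrightarrow> (\<And>i. i \<in> A \<Longrightarrow> vconv v (s i) (L i)) \<Longrightarrow>
   vconv v (\<lambda>n. \<Sum>i\<in>A. s i n) (\<Sum>i\<in>A. L i)"
proof (induction A rule: finite_induct)
  case empty then show ?case by (simp add: vconv_const)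
next
  case (insert x F) then show ?case by (simp add: vconv_add)
qed

lemma vconv_bound:
  assumes "vconv v s L" "\<forall>\<^sub>F n in sequentially. v (s n - P) \<le> c"
  shows "v (L - P) \<le> c"
proof (rule ccontr)
  assume "\<not> v (L - P) \<le> c"
  then have c: "c < v (L - P)" by simp
  have "\<forall>\<^sub>F n in sequentially. v (s n - L) < v (L - P) - c"
    using assms(1) c unfolding vconv_def by (auto dest!: order_tendstoD(2)[where a = "v (L - P) - c"])
  then have "\<forall>\<^sub>F n in sequentially. False"
    using assms(2)
  proof eventually_elim
    case (elim n)
    have "v (L - P) \<le> max (v (L - s n)) (v (s n - P))" by (rule v_tri)
    then have "v (L - P) \<le> v (L - s n) \<or> v (L - P) \<le> v (s n - P)" by (simp add: le_max_iff_disj)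
    then show False using elim v_commute[of L "s n"] c v_nonneg[of "s n - P"] by linarith
  qed
  then show False by simp
qed

lemma vconv_cauchy:
  assumes "\<And>e. e > 0 \<Longrightarrow> \<exists>N. \<forall>n\<ge>N. v (s (Suc n) - s n) < e"
  shows "\<exists>L. vconv v s L"
proof -
  have "vcomplete v" using cp by (simp add: Cp_field_def)
  moreover have "\<forall>e>0. \<exists>N. \<forall>m\<ge>N. \<forall>n\<ge>N. v (s m - s n) < e"
  proof (intro allI impI)
    fix e :: real assume e: "e > 0"
    obtain N where N: "\<forall>n\<ge>N. v (s (Suc n) - s n) < e" using assms[OF e] by blast
    have a: "v (s (n + k) - s n) < e" if "n \<ge> N" for n k
    proof (induction k)
      case 0 then show ?case using e by simp
    next
      case (Suc k)
      have "v (s (n + Suc k) - s n) \<le> max (v (s (Suc (n + k)) - s (n + k))) (v (s (n + k) - s n))"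
        using v_tri[of "s (Suc (n+k))" "s n" "s (n+k)"] by simp
      moreover have "v (s (Suc (n + k)) - s (n + k)) < e" using N that by simp
      ultimately show ?case using Suc by simp
    qed
    show "\<exists>N. \<forall>m\<ge>N. \<forall>n\<ge>N. v (s m - s n) < e"
    proof (intro exI allI impI)
      fix m n assume "m \<ge> N" "n \<ge> N"
      show "v (s m - s n) < e"
      proof (cases "m \<ge> n")
        case True then show ?thesis using a[of n "m - n"] \<open>n \<ge> N\<close> by simp
      next
        case False then show ?thesis using a[of m "n - m"] \<open>m \<ge> N\<close> v_commute by simp
      qed
    qed
  qed
  ultimately show ?thesis unfolding vcomplete_def by blast
qed

lemma vseries_conv:
  assumes "(\<lambda>n. v (a n)) \<longlonglongrightarrow> 0"
  shows "vconv v (\<lambda>N. \<Sum>n<N. a n) (vsuminf v a)"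
proof -
  have "\<exists>L. vconv v (\<lambda>N. \<Sum>n<N. a n) L"
  proof (rule vconv_cauchy)
    fix e :: real assume "e > 0"
    then obtain N where "\<forall>n\<ge>N. norm (v (a n) - 0) < e" using assms unfolding LIMSEQ_iff by blast
    then show "\<exists>N. \<forall>n\<ge>N. v ((\<Sum>n<Suc n. a n) - (\<Sum>n<n. a n)) < e" by auto
  qed
  then obtain L where L: "vconv v (\<lambda>N. \<Sum>n<N. a n) L" by blast
  then show ?thesis unfolding vsuminf_def using vlim_eq[OF L] by simp
qed

lemma vseries_tail:
  assumes "(\<lambda>n. v (a n)) \<longlonglongrightarrow> 0" "\<And>n. n \<ge> N \<Longrightarrow> v (a n) \<le> c" "0 \<le> c"
  shows "v (vsuminf v a - (\<Sum>n<N. a n)) \<le> c"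
proof (rule vconv_bound[OF vseries_conv[OF assms(1)]])
  show "\<forall>\<^sub>F n in sequentially. v ((\<Sum>n<n. a n) - (\<Sum>n<N. a n)) \<le> c"
    using eventually_ge_at_top[of N]
  proof eventually_elim
    case (elim n)
    have "(\<Sum>n<n. a n) - (\<Sum>n<N. a n) = (\<Sum>i\<in>{N..<n}. a i)"
      using elim by (metis atLeast0LessThan sum_diff_nat_ivl zero_le)
    also have "v \<dots> \<le> c" using assms(2,3) by (intro v_sum_le) auto
    finally show ?case .
  qed
qed

end

context cpf begin

definition rho :: real where "rho = real p powr (-1 / (real p - 1))"

lemma rho_pos: "0 < rho" using p_ge2 by (simp add: rho_def)
lemma rho_lt1: "rho < 1" unfolding rho_def using p_ge2 by (intro powr_less_one) auto
lemma rho_pow: "rho ^ (p - 1) = 1 / real p"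
proof -
  have "rho ^ (p - 1) = real p powr (real (p - 1) * (-1 / (real p - 1)))"
    unfolding rho_def using p_ge2 by (subst powr_power) auto
  also have "real (p - 1) * (-1 / (real p - 1)) = -1" using p_ge2 by (simp add: of_nat_diff)
  finally show ?thesis by (simp add: powr_minus_divide)
qed

lemma v_prod: "v (\<Prod>i\<in>A. f i) = (\<Prod>i\<in>A. v (f i))"
  by (induction A rule: infinite_finite_induct) (simp_all add: v_mult)

lemma v_fact_rec: "v (of_nat (fact n)) = (1 / real p) ^ (n div p) * v (of_nat (fact (n div p)))"
proof -
  have p0: "p > 0" using p_ge2 by simp
  have S: "{k\<in>{1..n}. p dvd k} = (\<lambda>i. p * i) ` {1..n div p}"
  proof (intro set_eqI iffI)
    fix k assume "k \<in> {k\<in>{1..n}. p dvd k}"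
    then have k: "1 \<le> k" "k \<le> n" "p dvd k" by simp_all
    from k(3) obtain i where i: "k = p * i" by (rule dvdE)
    have "i \<noteq> 0" using k(1) i by (intro notI) simp
    then have "1 \<le> i" by simp
    moreover have "i \<le> n div p" using div_le_mono[OF k(2), of p] i p0 by simp
    ultimately show "k \<in> (\<lambda>i. p * i) ` {1..n div p}" unfolding i by (intro imageI) simp
  next
    fix k assume "k \<in> (\<lambda>i. p * i) ` {1..n div p}"
    then obtain i where i1: "k = p * i" and i2: "i \<in> {1..n div p}" by (rule imageE)
    have "p * i \<le> p * (n div p)" using i2 by (intro mult_le_mono2) simp
    also have "\<dots> \<le> n" by (rule times_div_less_eq_dividend)
    finally have "p * i \<le> n" .
    moreover have "0 < p * i" using p0 i2 by simp
    ultimately show "k \<in> {k\<in>{1..n}. p dvd k}" unfolding i1 mem_Collect_eq atLeastAtMost_iff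
      by (intro conjI) auto
  qed
  have "v (of_nat (fact n)) = (\<Prod>k\<in>{1..n}. v (of_nat k))"
    by (simp add: fact_prod v_prod)
  also have "\<dots> = (\<Prod>k\<in>{1..n}. if p dvd k then v (of_nat k) else 1)"
    by (intro prod.cong) (auto simp: v_coprime)
  also have "\<dots> = (\<Prod>k\<in>{k\<in>{1..n}. p dvd k}. v (of_nat k))"
    by (rule prod.inter_filter[symmetric]) simp
  also have "\<dots> = (\<Prod>i\<in>{1..n div p}. v (of_nat (p * i)))"
    unfolding S using p0 by (subst prod.reindex) (auto simp: inj_on_def)
  also have "\<dots> = (\<Prod>i\<in>{1..n div p}. (1 / real p) * v (of_nat i))"
    by (simp add: v_mult v_p)
  also have "\<dots> = (1 / real p) ^ (n div p) * (\<Prod>i\<in>{1..n div p}. v (of_nat i))"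
  proof -
    have "(\<Prod>i\<in>{1..n div p}. (1 / real p) * v (of_nat i)) = (\<Prod>i\<in>{1..n div p}. 1 / real p) * (\<Prod>i\<in>{1..n div p}. v (of_nat i))"
      by (rule prod.distrib)
    moreover have "(\<Prod>i\<in>{1..n div p}. 1 / real p) = (1 / real p) ^ (n div p)" by simp
    ultimately show ?thesis by simp
  qed
  also have "\<dots> = (1 / real p) ^ (n div p) * v (of_nat (fact (n div p)))"
    by (simp add: fact_prod v_prod)
  finally show ?thesis .
qed

lemma v_fact_ge: "n \<ge> 1 \<Longrightarrow> v (of_nat (fact n)) \<ge> rho ^ (n - 1)"
proof (induction n rule: less_induct)
  case (less n)
  define m where "m = n div p"
  show ?case
  proof (cases "m = 0")
    case True
    then have "v (of_nat (fact n)) = 1" using v_fact_rec[of n] by (simp add: m_def)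
    then show ?thesis using rho_pos rho_lt1 by (simp add: power_le_one)
  next
    case False
    have mn: "m < n" using p_ge2 less.prems by (simp add: m_def)
    have IH: "v (of_nat (fact m)) \<ge> rho ^ (m - 1)" using less.IH[OF mn] False by simp
    have "rho ^ (n - 1) \<le> rho ^ (p * m - 1)"
    proof (rule power_decreasing)
      have "p * m \<le> n" unfolding m_def by (metis div_times_less_eq_dividend mult.commute)
      then show "p * m - 1 \<le> n - 1" by (rule diff_le_mono)
    qed (use rho_pos rho_lt1 in auto)
    also have "p * m - 1 = (p - 1) * m + (m - 1)" using False p_ge2
      by (simp add: algebra_simps diff_mult_distrib)
    also have "rho ^ \<dots> = (1 / real p) ^ m * rho ^ (m - 1)"
      unfolding power_add power_mult rho_pow ..
    also have "\<dots> \<le> (1 / real p) ^ m * v (of_nat (fact m))"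
      using IH by (intro mult_left_mono) auto
    also have "\<dots> = v (of_nat (fact n))" using v_fact_rec[of n] by (simp add: m_def)
    finally show ?thesis .
  qed
qed

lemma v_nat_ge: "k \<ge> 1 \<Longrightarrow> v (of_nat k) \<ge> rho ^ (k - 1)"
proof -
  assume k: "k \<ge> 1"
  have "fact k = k * fact (k - 1)" using k by (simp add: fact_reduce)
  then have "v (of_nat (fact k)) = v (of_nat k) * v (of_nat (fact (k - 1)))"
    by (simp add: v_mult)
  also have "\<dots> \<le> v (of_nat k)" using v_of_nat_le1[of "fact (k - 1)"] by (simp add: mult_left_le)
  finally show ?thesis using v_fact_ge[OF k] by linarith
qed

end

context cpf begin

lemma geo_null: "0 \<le> c \<Longrightarrow> c < 1 \<Longrightarrow> (\<lambda>n. d * c ^ n) \<longlonglongrightarrow> (0::real)"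
  using tendsto_mult[OF tendsto_const[of d] LIMSEQ_power_zero[of c]] by simp

lemma of_nat_fact_nz: "(of_nat (fact n) :: 'a) \<noteq> 0"
  using char0[of "fact n"] by simp

lemma log_term_bound:
  assumes "v z < rho"
  shows "v ((-1) ^ n * z ^ Suc n / of_nat (Suc n)) \<le> v z * (v z / rho) ^ n"
proof -
  have "v ((-1) ^ n * z ^ Suc n / of_nat (Suc n)) = v z ^ Suc n / v (of_nat (Suc n))"
    by (simp add: v_divide v_mult v_power v_minus1)
  also have "\<dots> \<le> v z ^ Suc n / rho ^ n"
  proof (rule divide_left_mono)
    have "0 < rho ^ n" using rho_pos by simp
    moreover have "rho ^ n \<le> v (of_nat (Suc n))" using v_nat_ge[of "Suc n"] by simp
    ultimately show "rho ^ n \<le> v (of_nat (Suc n))" "0 < v (of_nat (Suc n)) * rho ^ n" by simp_all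
  qed simp
  also have "\<dots> = v z * (v z / rho) ^ n" by (simp add: power_divide)
  finally show ?thesis .
qed

lemma log_terms_null:
  assumes "v z < rho"
  shows "(\<lambda>n. v ((-1) ^ n * z ^ Suc n / of_nat (Suc n))) \<longlonglongrightarrow> 0"
  by (rule null_cmp[OF always_eventually[OF allI[OF log_term_bound[OF assms]]]])
     (use assms rho_pos in \<open>auto intro!: geo_null\<close>)

lemma plog_approx:
  assumes "v z < rho"
  shows "v (plog v (1 + z) - z) \<le> v z * (v z / rho)"
proof -
  have "v (vsuminf v (\<lambda>n. (-1) ^ n * z ^ Suc n / of_nat (Suc n))
          - (\<Sum>n<1. (-1) ^ n * z ^ Suc n / of_nat (Suc n))) \<le> v z * (v z / rho)"
  proof (rule vseries_tail[OF log_terms_null[OF assms]])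
    fix n :: nat assume "1 \<le> n"
    have "v ((-1) ^ n * z ^ Suc n / of_nat (Suc n)) \<le> v z * (v z / rho) ^ n"
      by (rule log_term_bound[OF assms])
    also have "\<dots> \<le> v z * (v z / rho) ^ 1"
      using assms rho_pos \<open>1 \<le> n\<close>
      by (intro mult_left_mono power_decreasing) auto
    finally show "v ((-1) ^ n * z ^ Suc n / of_nat (Suc n)) \<le> v z * (v z / rho)" by simp
  qed (use rho_pos in simp)
  then show ?thesis by (simp add: plog_def)
qed

lemma plog_v:
  assumes "v z < rho" "z \<noteq> 0"
  shows "v (plog v (1 + z)) = v z"
proof -
  have "v (plog v (1 + z) - z) < v z"
  proof -
    have "v z / rho < 1" using assms rho_pos by simp
    then have "v z * (v z / rho) < v z * 1" using v_pos[OF assms(2)] by (rule mult_strict_left_mono)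
    then have "v z * (v z / rho) < v z" by simp
    then show ?thesis using plog_approx[OF assms(1)] by linarith
  qed
  then have "v (z + (plog v (1 + z) - z)) = v z" by (rule v_add_eq)
  then show ?thesis by simp
qed

lemma exp_term_bound:
  "v (y ^ n / of_nat (fact n)) \<le> (if n = 0 then 1 else rho * (v y / rho) ^ n)"
proof (cases "n = 0")
  case False
  have "v (y ^ n / of_nat (fact n)) = v y ^ n / v (of_nat (fact n))" by (simp add: v_divide v_power)
  also have "\<dots> \<le> v y ^ n / rho ^ (n - 1)"
  proof (rule divide_left_mono)
    have "0 < rho ^ (n - 1)" using rho_pos by simp
    moreover have "rho ^ (n - 1) \<le> v (of_nat (fact n))" using v_fact_ge[of n] False by simp
    ultimately show "rho ^ (n - 1) \<le> v (of_nat (fact n))" "0 < v (of_nat (fact n)) * rho ^ (n - 1)" by simp_all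
  qed simp
  also have "\<dots> = rho * (v y / rho) ^ n"
  proof -
    have "rho ^ n = rho * rho ^ (n - 1)" using False by (metis power_eq_if)
    then show ?thesis using rho_pos by (simp add: power_divide)
  qed
  finally show ?thesis using False by simp
qed simp

lemma exp_terms_null:
  assumes "v y < rho"
  shows "(\<lambda>n. v (y ^ n / of_nat (fact n))) \<longlonglongrightarrow> 0"
proof (rule null_cmp)
  show "\<forall>\<^sub>F n in sequentially. v (y ^ n / of_nat (fact n)) \<le> rho * (v y / rho) ^ n"
    using eventually_gt_at_top[of 0]
  proof eventually_elim
    case (elim n) then show ?case using exp_term_bound[of y n] by simp
  qed
  show "(\<lambda>n. rho * (v y / rho) ^ n) \<longlonglongrightarrow> 0" using assms rho_pos by (intro geo_null) auto
qed simp

lemma pexp_approx: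
  assumes "v y < rho"
  shows "v (pexp v y - 1 - y) \<le> v y * (v y / rho)"
proof -
  have "v (vsuminf v (\<lambda>n. y ^ n / of_nat (fact n)) - (\<Sum>n<2. y ^ n / of_nat (fact n))) \<le> v y * (v y / rho)"
  proof (rule vseries_tail[OF exp_terms_null[OF assms]])
    fix n :: nat assume n: "2 \<le> n"
    have "v (y ^ n / of_nat (fact n)) \<le> rho * (v y / rho) ^ n" using exp_term_bound[of y n] n by simp
    also have "\<dots> \<le> rho * (v y / rho) ^ 2"
      using assms rho_pos n by (intro mult_left_mono power_decreasing) auto
    also have "\<dots> = v y * (v y / rho)" using rho_pos by (simp add: power2_eq_square)
    finally show "v (y ^ n / of_nat (fact n)) \<le> v y * (v y / rho)" .
  qed (use rho_pos in simp)
  moreover have "(\<Sum>n<2. y ^ n / of_nat (fact n)) = 1 + y" by (simp add: numeral_2_eq_2)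
  ultimately show ?thesis by (simp add: pexp_def diff_diff_eq)
qed

lemma pexp_v1:
  assumes "v y < rho" "y \<noteq> 0"
  shows "v (pexp v y - 1) = v y"
proof -
  have "v (pexp v y - 1 - y) < v y"
  proof -
    have "v y / rho < 1" using assms rho_pos by simp
    then have "v y * (v y / rho) < v y * 1" using v_pos[OF assms(2)] by (rule mult_strict_left_mono)
    then have "v y * (v y / rho) < v y" by simp
    then show ?thesis using pexp_approx[OF assms(1)] by linarith
  qed
  then have "v (y + (pexp v y - 1 - y)) = v y" by (rule v_add_eq)
  then show ?thesis by simp
qed

lemma pexp_0: "pexp v 0 = 1"
proof -
  have "v (pexp v 0 - 1 - 0) \<le> 0" using pexp_approx[of 0] rho_pos by simp
  then have "v (pexp v 0 - 1) = 0" using v_nonneg[of "pexp v 0 - 1"] by simp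
  then show ?thesis by simp
qed

lemma bounded_null:
  assumes "(\<lambda>n. v (a n)) \<longlonglongrightarrow> 0"
  obtains B where "B > 0" "\<And>n. v (a n) \<le> B"
proof -
  have "Bseq (\<lambda>n. v (a n))" using assms by (intro Cauchy_Bseq LIMSEQ_imp_Cauchy)
  then obtain B where "B > 0" "\<And>n. norm (v (a n)) \<le> B" unfolding Bseq_def by blast
  then show ?thesis using that by simp
qed

lemma vcauchy_product:
  assumes a: "(\<lambda>n. v (a n)) \<longlonglongrightarrow> 0" and b: "(\<lambda>n. v (b n)) \<longlonglongrightarrow> 0"
  shows "vconv v (\<lambda>N. \<Sum>n<N. \<Sum>k\<le>n. a k * b (n - k)) (vsuminf v a * vsuminf v b)"
proof (rule vconv_comparison)
  show "vconv v (\<lambda>N. (\<Sum>n<N. a n) * (\<Sum>n<N. b n)) (vsuminf v a * vsuminf v b)"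
    by (rule vconv_mult[OF vseries_conv[OF a] vseries_conv[OF b]])
  obtain Ba where Ba: "Ba > 0" "\<And>n. v (a n) \<le> Ba" using bounded_null[OF a] by blast
  obtain Bb where Bb: "Bb > 0" "\<And>n. v (b n) \<le> Bb" using bounded_null[OF b] by blast
  define B where "B = max Ba Bb"
  have B: "B > 0" "\<And>n. v (a n) \<le> B" "\<And>n. v (b n) \<le> B"
    using Ba Bb unfolding B_def by (auto intro: le_max_iff_disj[THEN iffD2])
  show "(\<lambda>N. v ((\<Sum>n<N. \<Sum>k\<le>n. a k * b (n - k)) - (\<Sum>n<N. a n) * (\<Sum>n<N. b n))) \<longlonglongrightarrow> 0"
    unfolding LIMSEQ_iff
  proof (intro allI impI)
    fix e :: real assume e: "e > 0"
    have eB: "e / B > 0" using e B by simp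
    obtain K1 where K1: "\<forall>n\<ge>K1. norm (v (a n) - 0) < e / B" using a eB unfolding LIMSEQ_iff by blast
    obtain K2 where K2: "\<forall>n\<ge>K2. norm (v (b n) - 0) < e / B" using b eB unfolding LIMSEQ_iff by blast
    define K where "K = max K1 K2"
    show "\<exists>N0. \<forall>N\<ge>N0. norm (v ((\<Sum>n<N. \<Sum>k\<le>n. a k * b (n - k)) - (\<Sum>n<N. a n) * (\<Sum>n<N. b n)) - 0) < e"
    proof (intro exI allI impI)
      fix N assume N: "N \<ge> 2 * K"
      define T where "T = {(i, j). i + j < N}"
      define S where "S = {..<N} \<times> {..<N}"
      have TS: "T \<subseteq> S" unfolding T_def S_def by auto
      have fS: "finite S" unfolding S_def by simp
      have C: "(\<Sum>n<N. \<Sum>k\<le>n. a k * b (n - k)) = (\<Sum>(i, j)\<in>T. a i * b j)"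
        unfolding T_def by (rule sum.triangle_reindex[symmetric])
      have P: "(\<Sum>n<N. a n) * (\<Sum>n<N. b n) = (\<Sum>(i, j)\<in>S. a i * b j)"
        unfolding S_def by (simp add: sum_product sum.cartesian_product)
      have "(\<Sum>(i, j)\<in>S. a i * b j) = (\<Sum>(i, j)\<in>S - T. a i * b j) + (\<Sum>(i, j)\<in>T. a i * b j)"
        by (rule sum.subset_diff[OF TS fS])
      then have D: "(\<Sum>n<N. \<Sum>k\<le>n. a k * b (n - k)) - (\<Sum>n<N. a n) * (\<Sum>n<N. b n)
                 = - (\<Sum>(i, j)\<in>S - T. a i * b j)" using C P by simp
      have "v (\<Sum>(i, j)\<in>S - T. a i * b j) < e"
      proof (rule v_sum_less[OF _ e])
        fix ij assume ij: "ij \<in> S - T"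
        obtain i j where ijd: "ij = (i, j)" by force
        have "i + j \<ge> N" using ij unfolding ijd T_def by auto
        then have "i \<ge> K \<or> j \<ge> K" using N by linarith
        then show "v (case ij of (i, j) \<Rightarrow> a i * b j) < e"
        proof
          assume "i \<ge> K"
          then have "v (a i) < e / B" using K1 by (simp add: K_def)
          then have "v (a i) * v (b j) \<le> e / B * B" 
            using B(3)[of j] eB by (intro mult_mono) auto
          moreover have "v (a i) * v (b j) < e / B * B \<or> v (b j) = 0"
            using \<open>v (a i) < e / B\<close> B(3)[of j] eB
            by (metis mult_strict_right_mono mult_mono order_le_less not_le v_nonneg mult_le_cancel_left_pos)
          ultimately show ?thesis using e B unfolding ijd by (auto simp: v_mult)
        next
          assume "j \<ge> K"
          then have "v (b j) < e / B" using K2 by (simp add: K_def)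
          have "v (a i) * v (b j) \<le> B * v (b j)" using B(2)[of i] by (intro mult_right_mono) auto
          also have "\<dots> < B * (e / B)" using \<open>v (b j) < e / B\<close> B(1) by (rule mult_strict_left_mono)
          finally show ?thesis using B unfolding ijd by (simp add: v_mult)
        qed
      qed
      then show "norm (v ((\<Sum>n<N. \<Sum>k\<le>n. a k * b (n - k)) - (\<Sum>n<N. a n) * (\<Sum>n<N. b n)) - 0) < e"
        unfolding D by simp
    qed
  qed
qed

lemma binom_exp: fixes x y :: 'a shows "(x + y) ^ n / of_nat (fact n) = (\<Sum>k\<le>n. x ^ k / of_nat (fact k) * (y ^ (n - k) / of_nat (fact (n - k))))"
proof -
  have "(x + y) ^ n = (\<Sum>k\<le>n. of_nat (n choose k) * x ^ k * y ^ (n - k))" by (rule binomial_ring)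
  then have "(x + y) ^ n / of_nat (fact n) = (\<Sum>k\<le>n. of_nat (n choose k) * x ^ k * y ^ (n - k) / of_nat (fact n))"
    by (simp add: sum_divide_distrib)
  also have "\<dots> = (\<Sum>k\<le>n. x ^ k / of_nat (fact k) * (y ^ (n - k) / of_nat (fact (n - k))))"
  proof (rule sum.cong[OF refl])
    fix k assume "k \<in> {..n}"
    then have kn: "k \<le> n" by simp
    have e: "(of_nat (fact k) :: 'a) * of_nat (fact (n - k)) * of_nat (n choose k) = of_nat (fact n)"
      using binomial_fact_lemma[OF kn] by (metis of_nat_mult)
    have nz: "(of_nat (fact k) :: 'a) \<noteq> 0" "(of_nat (fact (n - k)) :: 'a) \<noteq> 0" "(of_nat (fact n) :: 'a) \<noteq> 0"
      by (simp_all add: of_nat_fact_nz)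
    show "of_nat (n choose k) * x ^ k * y ^ (n - k) / of_nat (fact n) = x ^ k / of_nat (fact k) * (y ^ (n - k) / of_nat (fact (n - k)))"
      using nz by (simp add: e[symmetric] field_simps)
  qed
  finally show ?thesis .
qed

lemma pexp_add:
  assumes "v x < rho" "v y < rho"
  shows "pexp v (x + y) = pexp v x * pexp v y"
proof -
  have "vconv v (\<lambda>N. \<Sum>n<N. \<Sum>k\<le>n. x ^ k / of_nat (fact k) * (y ^ (n - k) / of_nat (fact (n - k)))) (pexp v x * pexp v y)"
    unfolding pexp_def by (rule vcauchy_product[OF exp_terms_null[OF assms(1)] exp_terms_null[OF assms(2)]])
  then have "vconv v (\<lambda>N. \<Sum>n<N. (x + y) ^ n / of_nat (fact n)) (pexp v x * pexp v y)"
    by (simp add: binom_exp)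
  then show ?thesis unfolding pexp_def vsuminf_def by (rule vlim_eq)
qed

end


locale cpq = cpf p v for p :: nat and v :: "'a::field \<Rightarrow> real" +
  fixes q :: 'a
  assumes q_small: "v (q - 1) < rho" and q_ne: "q \<noteq> 1"
begin

definition lam where "lam = plog v q"
definition E where "E t = qpow v q t"

lemma lam_v: "v lam = v (q - 1)"
  using plog_v[OF q_small] q_ne by (simp add: lam_def)
lemma lam_nz: "lam \<noteq> 0" using lam_v q_ne by (metis right_minus_eq v_zero_iff)
lemma lam_small: "v lam < rho" using lam_v q_small by simp

lemma small_t: "v t \<le> 1 \<Longrightarrow> v (t * lam) < rho"
proof -
  assume "v t \<le> 1"
  then have "v (t * lam) \<le> v lam" by (simp add: v_mult mult_left_le_one_le)
  then show ?thesis using lam_small by linarith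
qed

lemma E_def2: "E t = pexp v (t * lam)" by (simp add: E_def qpow_def lam_def)

lemma E_add: "v s \<le> 1 \<Longrightarrow> v t \<le> 1 \<Longrightarrow> E (s + t) = E s * E t"
  unfolding E_def2 by (simp add: distrib_right pexp_add small_t)

lemma E_v1: "v t \<le> 1 \<Longrightarrow> v (E t - 1) = v t * v lam"
proof (cases "t = 0")
  case True then show ?thesis by (simp add: E_def2 pexp_0)
next
  case False
  assume "v t \<le> 1"
  then show ?thesis unfolding E_def2 using pexp_v1[OF small_t] False lam_nz by (simp add: v_mult)
qed

lemma E_v1_lt: "v t \<le> 1 \<Longrightarrow> v (E t - 1) < 1"
proof -
  assume t: "v t \<le> 1"
  have "v t * v lam \<le> v lam" using t by (simp add: mult_left_le_one_le)
  then show ?thesis using E_v1[OF t] lam_small rho_lt1 by linarith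
qed

lemma E_v: "v t \<le> 1 \<Longrightarrow> v (E t) = 1"
proof -
  assume t: "v t \<le> 1"
  have "v (1 + (E t - 1)) = v 1" using E_v1_lt[OF t] by (intro v_add_eq) simp
  then show ?thesis by simp
qed

lemma E_0: "E 0 = 1" by (simp add: E_def2 pexp_0)

lemma E_nat: "E (of_nat n) = E 1 ^ n"
proof (induction n)
  case 0 then show ?case by (simp add: E_0)
next
  case (Suc n)
  have "E (of_nat (Suc n)) = E (of_nat n + 1)" by (simp add: add.commute)
  also have "\<dots> = E (of_nat n) * E 1" by (rule E_add) (simp_all add: v_of_nat_le1)
  finally show ?case using Suc by simp
qed

lemma E_nat_add: "E (of_nat (a + b)) = E (of_nat a) * E (of_nat b)"
  unfolding E_nat power_add ..

lemma E_nat_mult: "E (of_nat (a * b)) = E (of_nat a) ^ b"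
  unfolding E_nat power_mult ..

lemma E_ne1: "n > 0 \<Longrightarrow> E (of_nat n) \<noteq> 1"
proof -
  assume "n > 0"
  then have "(of_nat n :: 'a) \<noteq> 0" using char0 by simp
  then have "v (E (of_nat n) - 1) > 0" using E_v1[OF v_of_nat_le1[of n]] lam_nz v_pos by simp
  then show ?thesis by auto
qed

lemma E_cont: "v s \<le> 1 \<Longrightarrow> v t \<le> 1 \<Longrightarrow> v (E s - E t) \<le> v (s - t)"
proof -
  assume s: "v s \<le> 1" and t: "v t \<le> 1"
  have st: "v (s - t) \<le> 1" using s t by (rule v_diff_le)
  have "E s = E (t + (s - t))" by simp
  also have "\<dots> = E t * E (s - t)" using t st by (rule E_add)
  finally have "E s - E t = E t * (E (s - t) - 1)" by (simp add: algebra_simps)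
  then have "v (E s - E t) = v (s - t) * v lam" by (simp add: v_mult E_v[OF t] E_v1[OF st])
  also have "\<dots> \<le> v (s - t)" using lam_small rho_lt1 by (simp add: mult_left_le)
  finally show ?thesis .
qed

lemma E_deriv: "vconv v (\<lambda>m. of_nat (p ^ m) / (E (of_nat (p ^ m)) - 1)) (inverse lam)"
proof -
  define y where "y m = (of_nat (p ^ m) :: 'a) * lam" for m
  have vy: "v (y m) = (1 / real p) ^ m * v lam" for m unfolding y_def v_mult v_ppow ..
  have ynz: "y m \<noteq> 0" for m
  proof -
    have "v (y m) > 0" unfolding vy using p_ge2 v_pos[OF lam_nz] by simp
    then show ?thesis by auto
  qed
  have vyl: "v (y m) < rho" for m using small_t[OF v_of_nat_le1[of "p ^ m"]] unfolding y_def .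
  have Em: "E (of_nat (p ^ m)) = pexp v (y m)" for m by (simp add: E_def2 y_def)
  have vE: "v (pexp v (y m) - 1) = v (y m)" for m using pexp_v1[OF vyl ynz] .
  have Enz: "pexp v (y m) - 1 \<noteq> 0" for m using vE[of m] ynz by (metis v_zero_iff)
  have eq: "of_nat (p ^ m) / (E (of_nat (p ^ m)) - 1) - inverse lam
         = inverse lam * ((y m - (pexp v (y m) - 1)) / (pexp v (y m) - 1))" for m
  proof -
    have o: "of_nat (p ^ m) = y m / lam" using lam_nz by (simp add: y_def)
    show ?thesis unfolding Em unfolding o using Enz[of m] lam_nz by (simp add: field_simps)
  qed
  have bound: "v (of_nat (p ^ m) / (E (of_nat (p ^ m)) - 1) - inverse lam)
          \<le> v (inverse lam) * ((1 / real p) ^ m * v lam / rho)" for m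
  proof -
    have "v ((y m - (pexp v (y m) - 1)) / (pexp v (y m) - 1)) = v (pexp v (y m) - 1 - y m) / v (y m)"
      by (simp add: v_divide vE v_commute[of "y m"])
    also have "\<dots> \<le> (v (y m) * (v (y m) / rho)) / v (y m)"
      using pexp_approx[OF vyl] v_pos[OF ynz] by (intro divide_right_mono) auto
    also have "\<dots> = v (y m) / rho" using v_pos[OF ynz] by simp
    finally have "v ((y m - (pexp v (y m) - 1)) / (pexp v (y m) - 1)) \<le> (1 / real p) ^ m * v lam / rho"
      by (simp add: vy)
    then show ?thesis unfolding eq v_mult by (simp add: mult_left_mono times_divide_eq_right[symmetric] del: times_divide_eq_right)
  qed
  show ?thesis unfolding vconv_def
  proof (rule null_cmp[OF always_eventually[OF allI[OF bound]]])
    have "(\<lambda>m. v (inverse lam) * ((1 / real p) ^ m * (v lam / rho))) \<longlonglongrightarrow> v (inverse lam) * (0 * (v lam / rho))"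
      using p_ge2 by (intro tendsto_intros LIMSEQ_power_zero) auto
    then show "(\<lambda>m. v (inverse lam) * ((1 / real p) ^ m * v lam / rho)) \<longlonglongrightarrow> 0" by simp
  qed simp
qed

end

context cpf begin

lemma Zp_le1: "x \<in> Zp v \<Longrightarrow> v x \<le> 1"
proof -
  assume "x \<in> Zp v"
  then obtain s where s: "vconv v (\<lambda>n. of_int (s n)) x" by (auto simp: Zp_def)
  have "v (x - 0) \<le> 1" by (rule vconv_bound[OF s]) (simp add: v_of_int_le1)
  then show ?thesis by simp
qed

lemma nat_in_Zp: "of_nat n \<in> Zp v"
  unfolding Zp_def using vconv_const[of "of_nat n"] by (auto intro!: exI[of _ "\<lambda>_. int n"])

lemma Zp_residue:
  assumes "x \<in> Zp v"
  shows "\<exists>r < p ^ m. v (x - of_nat r) \<le> (1 / real p) ^ m"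
proof -
  obtain s where s: "vconv v (\<lambda>n. of_int (s n)) x" using assms by (auto simp: Zp_def)
  have pos: "(1 / real p) ^ m > 0" using p_ge2 by simp
  obtain N where N: "v (of_int (s N) - x) < (1 / real p) ^ m" using s pos unfolding vconv_iff by blast
  define r where "r = nat (s N mod int (p ^ m))"
  have pm: "int (p ^ m) > 0" using p_ge2 by simp
  have r: "int r = s N mod int (p ^ m)" unfolding r_def using pm by simp
  have "s N mod int (p ^ m) < int (p ^ m)" using pm by simp
  then have rlt: "r < p ^ m" using r by linarith
  have "int p ^ m dvd s N - int r" unfolding r by (simp add: mod_eq_dvd_iff[symmetric])
  then have "v (of_int (s N - int r)) \<le> (1 / real p) ^ m" by (rule v_dvd_imp)
  then have a: "v (of_int (s N) - of_nat r) \<le> (1 / real p) ^ m" by simp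
  have "v (x - of_nat r) \<le> max (v (x - of_int (s N))) (v (of_int (s N) - of_nat r))" by (rule v_tri)
  then have "v (x - of_nat r) \<le> (1 / real p) ^ m" using a N v_commute[of x "of_int (s N)"] by auto
  then show ?thesis using rlt by blast
qed

lemma v_nat_diff_dvd:
  assumes "v (of_nat a - of_nat b) \<le> (1 / real p) ^ m"
  shows "a mod p ^ m = b mod p ^ m"
proof -
  have "v (of_int (int a - int b)) \<le> (1 / real p) ^ m" using assms by simp
  then have "int p ^ m dvd int a - int b" by (rule v_imp_dvd)
  then have "int a mod int (p ^ m) = int b mod int (p ^ m)" by (simp add: mod_eq_dvd_iff)
  then show ?thesis by (metis of_nat_eq_iff of_nat_mod)
qed

lemma pow_mod: "w ^ (p ^ m) = (1::'a) \<Longrightarrow> w ^ n = w ^ (n mod p ^ m)"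
proof -
  assume w: "w ^ (p ^ m) = 1"
  have "w ^ n = w ^ (p ^ m * (n div p ^ m) + n mod p ^ m)" by simp
  also have "\<dots> = w ^ (n mod p ^ m)" by (simp only: power_add power_mult w) simp
  finally show ?thesis .
qed

lemma upow_eq:
  assumes w: "w ^ (p ^ m) = 1" and x: "x \<in> Zp v" and r: "v (x - of_nat r) \<le> (1 / real p) ^ m"
  shows "upow v w x = w ^ r"
proof -
  define P where "P L \<longleftrightarrow> (\<forall>s::nat \<Rightarrow> nat. vconv v (\<lambda>k. of_nat (s k)) x \<longrightarrow> vconv v (\<lambda>k. w ^ s k) L)" for L
  have pos: "(1 / real p) ^ m > 0" using p_ge2 by simp
  have Pw: "P (w ^ r)" unfolding P_def
  proof (intro allI impI)
    fix s :: "nat \<Rightarrow> nat" assume s: "vconv v (\<lambda>k. of_nat (s k)) x"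
    obtain N where N: "\<forall>k\<ge>N. v (of_nat (s k) - x) < (1 / real p) ^ m" using s pos unfolding vconv_iff by blast
    have "\<forall>\<^sub>F k in sequentially. w ^ s k = w ^ r"
      using eventually_ge_at_top[of N]
    proof eventually_elim
      case (elim k)
      have "v (of_nat (s k) - of_nat r) \<le> max (v (of_nat (s k) - x)) (v (x - of_nat r))" by (rule v_tri)
      then have "v (of_nat (s k) - of_nat r) \<le> (1 / real p) ^ m" using N elim r by auto
      then have eq: "s k mod p ^ m = r mod p ^ m" by (rule v_nat_diff_dvd)
      have "w ^ s k = w ^ (s k mod p ^ m)" by (rule pow_mod[OF w])
      also have "\<dots> = w ^ (r mod p ^ m)" by (simp only: eq)
      also have "\<dots> = w ^ r" by (rule pow_mod[OF w, symmetric])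
      finally show ?case .
    qed
    then show "vconv v (\<lambda>k. w ^ s k) (w ^ r)" by (rule vconv_eventually[OF vconv_const])
  qed
  have "\<forall>k. \<exists>r. v (x - of_nat r) \<le> (1 / real p) ^ k" using Zp_residue[OF x] by blast
  from choice[OF this] obtain rs where rs: "\<And>k. v (x - of_nat (rs k)) \<le> (1 / real p) ^ k" by blast
  have rsc: "vconv v (\<lambda>k. of_nat (rs k)) x" unfolding vconv_def
  proof (rule null_cmp)
    show "\<forall>\<^sub>F k in sequentially. v (of_nat (rs k) - x) \<le> (1 / real p) ^ k"
    proof (intro always_eventually allI)
      fix k show "v (of_nat (rs k) - x) \<le> (1 / real p) ^ k" using rs[of k] v_commute[of x "of_nat (rs k)"] by simp
    qed
    show "(\<lambda>k. (1 / real p) ^ k) \<longlonglongrightarrow> 0" using p_ge2 by (intro LIMSEQ_power_zero) auto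
  qed simp
  have uniq: "L = w ^ r" if "P L" for L
  proof -
    have a: "vconv v (\<lambda>k. w ^ rs k) L" using that rsc unfolding P_def by blast
    have b: "vconv v (\<lambda>k. w ^ rs k) (w ^ r)" using Pw rsc unfolding P_def by blast
    show ?thesis using vconv_unique[OF a b] .
  qed
  have "upow v w x = (THE L. P L)" unfolding upow_def P_def ..
  also have "\<dots> = w ^ r" using Pw uniq by (rule the_equality)
  finally show ?thesis .
qed

lemma upow_nat: "w ^ (p ^ m) = 1 \<Longrightarrow> upow v w (of_nat y) = w ^ y"
  using upow_eq[of w m "of_nat y" y] nat_in_Zp by simp

end

context cpf begin

lemma alg_cl: "alg_closed TYPE('a)" using cp by (simp add: Cp_field_def)

lemma has_root: "0 < degree P \<Longrightarrow> \<exists>x::'a. poly P x = 0"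
  using alg_cl unfolding alg_closed_def by blast

lemma pow_one_nz: "w ^ (p ^ m) = (1::'a) \<Longrightarrow> w \<noteq> 0"
proof
  assume "w ^ (p ^ m) = 1" "w = 0"
  moreover have "p ^ m > 0" using p_ge2 by simp
  then have "(0::'a) ^ (p ^ m) = 0" by (rule zero_power)
  ultimately show False by simp
qed

lemma roots_poly: "roots_C p m = {w::'a. poly (monom 1 (p ^ m) - 1) w = 0}"
  by (simp add: roots_C_def poly_monom)

lemma roots_fin_card: "finite (roots_C p m :: 'a set) \<and> card (roots_C p m :: 'a set) \<le> p ^ m"
proof -
  define P :: "'a poly" where "P = monom 1 (p ^ m) - 1"
  have pm: "p ^ m \<noteq> 0" using p_ge2 by simp
  have c: "coeff P (p ^ m) = 1" using pm by (simp add: P_def)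
  then have nz: "P \<noteq> 0" by auto
  have "degree P \<le> p ^ m" unfolding P_def by (intro degree_diff_le degree_monom_le) simp
  then show ?thesis using card_poly_roots_bound[OF nz] poly_roots_finite[OF nz]
    unfolding roots_poly P_def by simp
qed

lemma prim_aux: "\<exists>z::'a. z ^ (p ^ m) = 1 \<and> (m > 0 \<longrightarrow> z ^ (p ^ (m - 1)) \<noteq> 1)"
proof (induction m)
  case 0 then show ?case by (intro exI[of _ 1]) simp
next
  case (Suc m)
  show ?case
  proof (cases "m = 0")
    case True
    define P :: "'a poly" where "P = (\<Sum>i<p. monom 1 i)"
    have "coeff P 1 = 1" using p_ge2 unfolding P_def coeff_sum coeff_monom
      by (simp add: sum.delta)
    then have "1 \<le> degree P" by (intro le_degree) simp
    then obtain z where z: "poly P z = 0" using has_root by fastforce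
    then have zs: "(\<Sum>i<p. z ^ i) = 0" unfolding P_def poly_sum poly_monom by simp
    have z1: "z \<noteq> 1"
    proof
      assume "z = 1"
      then have "(of_nat p :: 'a) = 0" using zs by simp
      then show False using char0 p_ge2 by simp
    qed
    have "(z ^ p - 1) / (z - 1) = 0" using zs geometric_sum[OF z1, of p] by simp
    then have "z ^ p = 1" using z1 by simp
    then show ?thesis using True z1 by (intro exI[of _ z]) simp
  next
    case False
    from Suc.IH obtain z :: 'a where z0: "z ^ (p ^ m) = 1" "m > 0 \<longrightarrow> z ^ (p ^ (m - 1)) \<noteq> 1" by blast
    have z: "z ^ (p ^ m) = 1" "z ^ (p ^ (m - 1)) \<noteq> 1" using z0 False by simp_all
    define P :: "'a poly" where "P = monom 1 p - [:z:]"
    have "coeff P p = 1" using p_ge2 unfolding P_def by (simp add: coeff_pCons split: nat.split)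
    then have "p \<le> degree P" by (intro le_degree) simp
    then obtain y where y: "poly P y = 0" using has_root p_ge2 by fastforce
    then have yp: "y ^ p = z" unfolding P_def by (simp add: poly_monom)
    have "y ^ (p ^ Suc m) = (y ^ p) ^ (p ^ m)" by (simp add: power_mult)
    then have a: "y ^ (p ^ Suc m) = 1" using yp z by simp
    have "p ^ m = p * p ^ (m - 1)" using False by (metis Suc_diff_1 not_gr0 power_Suc)
    then have "y ^ (p ^ m) = (y ^ p) ^ (p ^ (m - 1))" by (simp add: power_mult)
    then have b: "y ^ (p ^ (Suc m - 1)) \<noteq> 1" using yp z by simp
    show ?thesis using a b by blast
  qed
qed

lemma prim_root: "\<exists>z::'a. z ^ (p ^ m) = 1 \<and> (\<forall>k. z ^ k = 1 \<longrightarrow> p ^ m dvd k)"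
proof -
  obtain z :: 'a where z: "z ^ (p ^ m) = 1" "m > 0 \<longrightarrow> z ^ (p ^ (m - 1)) \<noteq> 1" using prim_aux by blast
  have "p ^ m dvd k" if zk: "z ^ k = 1" for k
  proof (cases "m = 0")
    case True then show ?thesis by simp
  next
    case False
    have z0: "z \<noteq> 0" using z(1) by (rule pow_one_nz)
    have pm: "p ^ m \<noteq> 0" using p_ge2 by simp
    define g where "g = gcd (p ^ m) k"
    obtain a b where ab: "p ^ m * a = k * b + g" using bezout_nat[OF pm, of k] unfolding g_def by blast
    have "z ^ (p ^ m * a) = 1" by (simp add: power_mult z(1))
    moreover have "z ^ (k * b) = 1" by (simp add: power_mult zk)
    ultimately have zg: "z ^ g = 1" using ab by (simp add: power_add)
    have "g dvd p ^ m" unfolding g_def by simp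
    then obtain j where j: "j \<le> m" "g = p ^ j" using divides_primepow_nat[OF prime_p] by blast
    show ?thesis
    proof (cases "j = m")
      case True then show ?thesis using j g_def by (metis gcd_dvd2)
    next
      case False
      then have "j \<le> m - 1" using j by simp
      then have "p ^ j dvd p ^ (m - 1)" by (simp add: le_imp_power_dvd)
      then obtain t where t: "p ^ (m - 1) = p ^ j * t" by (auto elim: dvdE)
      have "z ^ (p ^ (m - 1)) = (z ^ g) ^ t" unfolding t j(2) by (simp add: power_mult)
      then have "z ^ (p ^ (m - 1)) = 1" using zg by simp
      then show ?thesis using z(2) \<open>m \<noteq> 0\<close> by simp
    qed
  qed
  then show ?thesis using z(1) by blast
qed

lemma roots_image:
  assumes z: "z ^ (p ^ m) = (1::'a)" "\<forall>k. z ^ k = 1 \<longrightarrow> p ^ m dvd k"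
  shows "roots_C p m = (\<lambda>i. z ^ i) ` {..<p ^ m}" and "inj_on (\<lambda>i. z ^ i) {..<p ^ m}"
proof -
  have z0: "z \<noteq> 0" using z(1) by (rule pow_one_nz)
  show inj: "inj_on (\<lambda>i. z ^ i) {..<p ^ m}"
  proof (rule inj_onI)
    have key: "i = j" if "i \<le> j" "j < p ^ m" "z ^ i = z ^ j" for i j
    proof -
      have "z ^ j = z ^ i * z ^ (j - i)" using that(1) by (simp add: power_add[symmetric])
      then have "z ^ (j - i) = 1" using that(3) z0 by simp
      then have "p ^ m dvd j - i" using z(2) by blast
      moreover have "j - i < p ^ m" using that by simp
      ultimately have "j - i = 0" by (metis dvd_imp_le not_le neq0_conv)
      then show ?thesis using that(1) by simp
    qed
    fix i j assume "i \<in> {..<p ^ m}" "j \<in> {..<p ^ m}" "z ^ i = z ^ j"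
    then show "i = j" using key[of i j] key[of j i] by (cases "i \<le> j") auto
  qed
  have sub: "(\<lambda>i. z ^ i) ` {..<p ^ m} \<subseteq> roots_C p m"
  proof
    fix w assume "w \<in> (\<lambda>i. z ^ i) ` {..<p ^ m}"
    then obtain i where "w = z ^ i" by blast
    then have "w ^ (p ^ m) = (z ^ (p ^ m)) ^ i" by (simp add: power_mult[symmetric] mult.commute)
    then show "w \<in> roots_C p m" using z(1) by (simp add: roots_C_def)
  qed
  have "card ((\<lambda>i. z ^ i) ` {..<p ^ m}) = p ^ m" using card_image[OF inj] by simp
  then have "card ((\<lambda>i. z ^ i) ` {..<p ^ m}) = card (roots_C p m :: 'a set)"
    using roots_fin_card[of m] card_mono[OF _ sub] by simp
  then show "roots_C p m = (\<lambda>i. z ^ i) ` {..<p ^ m}"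
    using card_subset_eq[OF _ sub] roots_fin_card[of m] by simp
qed

lemma orth: "(\<Sum>w\<in>roots_C p m. (w::'a) ^ k) = (if p ^ m dvd k then of_nat (p ^ m) else 0)"
proof -
  obtain z :: 'a where z: "z ^ (p ^ m) = 1" "\<forall>k. z ^ k = 1 \<longrightarrow> p ^ m dvd k" using prim_root by blast
  have "(\<Sum>w\<in>roots_C p m. w ^ k) = (\<Sum>i<p ^ m. (z ^ i) ^ k)"
    unfolding roots_image(1)[OF z] by (subst sum.reindex[OF roots_image(2)[OF z]]) simp
  also have "\<dots> = (\<Sum>i<p ^ m. (z ^ k) ^ i)" by (simp add: power_mult[symmetric] mult.commute)
  also have "\<dots> = (if p ^ m dvd k then of_nat (p ^ m) else 0)"
  proof (cases "p ^ m dvd k")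
    case True
    then obtain t where "k = p ^ m * t" by (auto elim: dvdE)
    then have "z ^ k = 1" by (simp add: power_mult z(1))
    then show ?thesis using True by simp
  next
    case False
    then have zk: "z ^ k \<noteq> 1" using z(2) by blast
    have "(z ^ k) ^ (p ^ m) = (z ^ (p ^ m)) ^ k" by (simp add: power_mult[symmetric] mult.commute)
    then have "(z ^ k) ^ (p ^ m) = 1" using z(1) by simp
    then show ?thesis using False geometric_sum[OF zk, of "p ^ m"] by simp
  qed
  finally show ?thesis .
qed

lemma root_nz: "w \<in> roots_C p m \<Longrightarrow> (w::'a) \<noteq> 0"
  by (rule pow_one_nz) (simp add: roots_C_def)

lemma root_inv: "w \<in> roots_C p m \<Longrightarrow> inverse (w::'a) ^ (p ^ m) = 1"
  by (simp add: roots_C_def power_inverse)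

lemma orth2: "(\<Sum>w\<in>roots_C p m. inverse (w::'a) ^ r * w ^ y) = (if y mod p ^ m = r mod p ^ m then of_nat (p ^ m) else 0)"
proof -
  have pm: "p ^ m \<ge> 1" using p_ge2 by simp
  have "inverse w ^ r * w ^ y = w ^ (y + (p ^ m - 1) * r)" if w: "w \<in> roots_C p m" for w :: 'a
  proof -
    have w1: "w ^ (p ^ m) = 1" using w by (simp add: roots_C_def)
    have "w * w ^ (p ^ m - 1) = 1" using w1 pm by (metis power_Suc Suc_diff_1 less_le_trans zero_less_one)
    then have "inverse w = w ^ (p ^ m - 1)" by (metis inverse_unique)
    then show ?thesis by (simp add: power_add power_mult)
  qed
  then have "(\<Sum>w\<in>roots_C p m. inverse (w::'a) ^ r * w ^ y) = (\<Sum>w\<in>roots_C p m. w ^ (y + (p ^ m - 1) * r))"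
    by (intro sum.cong) auto
  also have "\<dots> = (if p ^ m dvd (y + (p ^ m - 1) * r) then of_nat (p ^ m) else 0)" by (rule orth)
  also have "(p ^ m dvd (y + (p ^ m - 1) * r)) = (y mod p ^ m = r mod p ^ m)"
  proof -
    have "int ((p ^ m - 1) * r) = (int (p ^ m) - 1) * int r"
      by (subst of_nat_mult, subst of_nat_diff[OF pm]) simp
    then have eq: "int (y + (p ^ m - 1) * r) = (int y - int r) + int r * int (p ^ m)"
      by (simp add: algebra_simps)
    have "(p ^ m dvd (y + (p ^ m - 1) * r)) = (int (p ^ m) dvd int (y + (p ^ m - 1) * r))"
      by (simp only: int_dvd_int_iff)
    also have "\<dots> = (int (p ^ m) dvd (int y - int r) + int r * int (p ^ m))" by (simp only: eq)
    also have "\<dots> = (int (p ^ m) dvd (int y - int r))" by (rule dvd_add_times_triv_right_iff)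
    also have "\<dots> = (int y mod int (p ^ m) = int r mod int (p ^ m))" by (simp add: mod_eq_dvd_iff)
    also have "\<dots> = (y mod p ^ m = r mod p ^ m)" by (metis of_nat_eq_iff of_nat_mod)
    finally show ?thesis .
  qed
  finally show ?thesis .
qed

end


context cpf begin
lemma nu_small: "d > 0 \<Longrightarrow> \<exists>M. \<forall>n\<ge>M. (1 / real p) ^ n < d"
proof -
  assume d: "d > 0"
  have "(\<lambda>n. (1 / real p) ^ n) \<longlonglongrightarrow> 0" using p_ge2 by (intro LIMSEQ_power_zero) auto
  then obtain M where "\<forall>n\<ge>M. norm ((1 / real p) ^ n - 0) < d" using d unfolding LIMSEQ_iff by blast
  then show ?thesis by auto
qed

lemma nu_pos: "(1 / real p) ^ n > 0" using p_ge2 by simp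
lemma nu_le1: "(1 / real p) ^ n \<le> 1" using p_ge2 by (simp add: power_le_one)
lemma nu_Suc: "(1 / real p) ^ Suc n = (1 / real p) ^ n / real p" by simp

lemma v_mult_ppow: "v (of_nat (p ^ N * j)) \<le> (1 / real p) ^ N"
proof -
  have "v (of_nat (p ^ N * j)) = (1 / real p) ^ N * v (of_nat j)" by (simp only: of_nat_mult v_mult v_ppow)
  also have "\<dots> \<le> (1 / real p) ^ N" using v_of_nat_le1[of j] nu_pos[of N] by (simp add: mult_left_le)
  finally show ?thesis .
qed

lemma sum_add_split: fixes n a :: nat shows "(\<Sum>y<n + a. g y) = (\<Sum>y<n. g y) + (\<Sum>s<a. g (s + n))"
proof (induction a)
  case 0 then show ?case by simp
next
  case (Suc a)
  have "(\<Sum>y<n + Suc a. g y) = (\<Sum>y<n + a. g y) + g (n + a)" by simp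
  also have "\<dots> = (\<Sum>y<n. g y) + ((\<Sum>s<a. g (s + n)) + g (a + n))" using Suc by (simp add: ac_simps)
  also have "(\<Sum>s<a. g (s + n)) + g (a + n) = (\<Sum>s<Suc a. g (s + n))" by simp
  finally show ?case .
qed

lemma sum_split: fixes a b :: nat shows "(\<Sum>y<a * b. g y) = (\<Sum>k<b. \<Sum>s<a. g (s + a * k))"
proof (induction b)
  case 0 then show ?case by simp
next
  case (Suc b)
  have "a * Suc b = a * b + a" by simp
  then have "(\<Sum>y<a * Suc b. g y) = (\<Sum>y<a * b. g y) + (\<Sum>s<a. g (s + a * b))"
    using sum_add_split[where n="a * b" and a=a and g=g] by (simp add: add.commute)
  then show ?case using Suc by simp
qed

end

locale cpqf = cpq p v q for p :: nat and v :: "'a::field \<Rightarrow> real" and q :: 'a +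
  fixes f :: "'a \<Rightarrow> 'a"
  assumes ud: "UD v f"
begin

definition fd where "fd = (SOME f'. \<forall>e>0. \<exists>d>0. \<forall>a\<in>Zp v. \<forall>x\<in>Zp v. \<forall>y\<in>Zp v.
      x \<noteq> y \<and> v (x - a) < d \<and> v (y - a) < d \<longrightarrow> v ((f x - f y) / (x - y) - f' a) < e)"

lemma fd_prop: "\<forall>e>0. \<exists>d>0. \<forall>a\<in>Zp v. \<forall>x\<in>Zp v. \<forall>y\<in>Zp v.
      x \<noteq> y \<and> v (x - a) < d \<and> v (y - a) < d \<longrightarrow> v ((f x - f y) / (x - y) - fd a) < e"
  using ud unfolding UD_def fd_def by (rule someI_ex)

lemma fd_cont:
  assumes e: "e > 0"
  shows "\<exists>d>0. \<forall>a\<in>Zp v. \<forall>b\<in>Zp v. v (a - b) < d \<longrightarrow> v (fd a - fd b) < e"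
proof -
  obtain d where d: "d > 0" and H: "\<forall>a\<in>Zp v. \<forall>x\<in>Zp v. \<forall>y\<in>Zp v.
      x \<noteq> y \<and> v (x - a) < d \<and> v (y - a) < d \<longrightarrow> v ((f x - f y) / (x - y) - fd a) < e"
    using fd_prop e by blast
  show ?thesis
  proof (intro exI[of _ d] conjI ballI impI d)
    fix a b assume a: "a \<in> Zp v" and b: "b \<in> Zp v" and ab: "v (a - b) < d"
    show "v (fd a - fd b) < e"
    proof (cases "a = b")
      case True then show ?thesis using e by simp
    next
      case False
      have "v ((f a - f b) / (a - b) - fd a) < e" using H[rule_format, of a a b] a b ab False d v_commute[of a b] by simp
      moreover have "v ((f a - f b) / (a - b) - fd b) < e" using H[rule_format, of b a b] a b ab False d by simp
      ultimately show ?thesis using v_diff_less[of "(f a - f b) / (a - b) - fd b" e "(f a - f b) / (a - b) - fd a"]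
        by simp
    qed
  qed
qed

lemma fd_bound: "\<exists>B>0. \<forall>y. v (fd (of_nat y)) \<le> B"
proof -
  obtain d where d: "d > 0" and H: "\<forall>a\<in>Zp v. \<forall>b\<in>Zp v. v (a - b) < d \<longrightarrow> v (fd a - fd b) < 1"
    using fd_cont[of 1] by auto
  obtain M where M: "(1 / real p) ^ M < d" using nu_small[OF d] by blast
  define B where "B = 1 + (\<Sum>s<p ^ M. v (fd (of_nat s)))"
  have B0: "B > 0" unfolding B_def by (simp add: add_pos_nonneg sum_nonneg)
  have "v (fd (of_nat y)) \<le> B" for y
  proof -
    define s where "s = y mod p ^ M"
    have sl: "s < p ^ M" using p_ge2 by (simp add: s_def)
    have "int (p ^ M) dvd int y - int s" by (simp add: s_def mod_eq_dvd_iff[symmetric] of_nat_mod)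
    then have "int p ^ M dvd int y - int s" by simp
    then have "v (of_int (int y - int s)) \<le> (1 / real p) ^ M" by (rule v_dvd_imp)
    moreover have "(of_int (int y - int s) :: 'a) = of_nat y - of_nat s" by simp
    ultimately have "v (of_nat y - of_nat s) < d" using M by simp
    then have a: "v (fd (of_nat y) - fd (of_nat s)) < 1" using H nat_in_Zp by blast
    have b: "v (fd (of_nat s)) \<le> (\<Sum>s<p ^ M. v (fd (of_nat s)))"
      using sl by (intro member_le_sum) auto
    have "v (fd (of_nat y)) \<le> v (fd (of_nat y) - fd (of_nat s)) + v (fd (of_nat s))"
      using v_triangle[of "fd (of_nat y) - fd (of_nat s)" "fd (of_nat s)"] by simp
    then show ?thesis using a b unfolding B_def by linarith
  qed
  then show ?thesis using B0 by blast
qed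

lemma diff_approx:
  assumes e: "e > 0"
  shows "\<exists>N0. \<forall>N\<ge>N0. \<forall>y j. v (f (of_nat (y + p ^ N * j)) - f (of_nat y) - of_nat (p ^ N * j) * fd (of_nat y)) \<le> e * (1 / real p) ^ N"
proof -
  obtain d where d: "d > 0" and H: "\<forall>a\<in>Zp v. \<forall>x\<in>Zp v. \<forall>y\<in>Zp v.
      x \<noteq> y \<and> v (x - a) < d \<and> v (y - a) < d \<longrightarrow> v ((f x - f y) / (x - y) - fd a) < e"
    using fd_prop e by blast
  obtain N0 where N0: "\<forall>n\<ge>N0. (1 / real p) ^ n < d" using nu_small[OF d] by blast
  show ?thesis
  proof (intro exI[of _ N0] allI impI)
    fix N y j assume N: "N \<ge> N0"
    define t :: 'a where "t = of_nat (p ^ N * j)"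
    have vt: "v t \<le> (1 / real p) ^ N" unfolding t_def by (rule v_mult_ppow)
    show "v (f (of_nat (y + p ^ N * j)) - f (of_nat y) - of_nat (p ^ N * j) * fd (of_nat y)) \<le> e * (1 / real p) ^ N"
    proof (cases "t = 0")
      case True
      then have "p ^ N * j = 0" unfolding t_def using char0 by simp
      then have "j = 0" using p_ge2 by simp
      then show ?thesis using e nu_pos[of N] by simp
    next
      case False
      have x: "of_nat (y + p ^ N * j) = of_nat y + t" by (simp add: t_def)
      have "v ((f (of_nat y + t) - f (of_nat y)) / (of_nat y + t - of_nat y) - fd (of_nat y)) < e"
        using H nat_in_Zp[of y] nat_in_Zp[of "y + p ^ N * j"] False d vt N0 N x
        by (metis (no_types, lifting) add_diff_cancel_left' add_cancel_right_right diff_self order_le_less_trans v_0)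
      then have "v ((f (of_nat y + t) - f (of_nat y)) / t - fd (of_nat y)) < e" by simp
      moreover have "f (of_nat y + t) - f (of_nat y) - t * fd (of_nat y) = t * ((f (of_nat y + t) - f (of_nat y)) / t - fd (of_nat y))"
        using False by (simp add: field_simps)
      ultimately have "v (f (of_nat y + t) - f (of_nat y) - t * fd (of_nat y)) \<le> v t * e"
        by (simp add: v_mult mult_left_mono)
      also have "\<dots> \<le> (1 / real p) ^ N * e" using vt e by (simp add: mult_right_mono)
      finally show ?thesis unfolding x by (simp add: t_def mult.commute)
    qed
  qed
qed

definition Qn :: "nat \<Rightarrow> 'a" where "Qn n = (1 - E (of_nat n)) / (1 - q)"

lemma qnum_Qn: "qnum v q (of_nat n) = Qn n" by (simp add: qnum_def Qn_def E_def)

lemma Qn_v: "v (Qn (p ^ N)) = (1 / real p) ^ N"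
proof -
  have "v (1 - E (of_nat (p ^ N))) = v (of_nat (p ^ N)) * v lam"
  proof -
    have "v (E (of_nat (p ^ N)) - 1) = v (of_nat (p ^ N)) * v lam" by (rule E_v1[OF v_of_nat_le1])
    then show ?thesis using v_commute[of 1 "E (of_nat (p ^ N))"] by simp
  qed
  moreover have "v (1 - q) = v lam" using lam_v v_commute[of 1 q] by simp
  ultimately have "v (Qn (p ^ N)) = v (of_nat (p ^ N))" using lam_nz unfolding Qn_def v_divide by simp
  then show ?thesis by (simp only: v_ppow)
qed

lemma Qn_nz: "Qn (p ^ N) \<noteq> 0" using Qn_v[of N] nu_pos[of N] by (metis v_0 less_irrefl)

lemma geo_E: "(\<Sum>k<n. E (of_nat (a * k))) * (1 - E (of_nat a)) = 1 - E (of_nat (a * n))"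
proof -
  have "(\<Sum>k<n. E (of_nat (a * k))) = (\<Sum>k<n. E (of_nat a) ^ k)" by (simp only: E_nat_mult)
  moreover have "E (of_nat (a * n)) = E (of_nat a) ^ n" by (simp only: E_nat_mult)
  ultimately show ?thesis using one_diff_power_eq[of "E (of_nat a)" n] by (simp add: mult.commute)
qed

lemma Qn_Suc: "Qn (p ^ Suc N) = Qn (p ^ N) * (\<Sum>j<p. E (of_nat (p ^ N * j)))"
proof -
  have g: "(\<Sum>j<p. E (of_nat (p ^ N * j))) * (1 - E (of_nat (p ^ N))) = 1 - E (of_nat (p ^ N * p))"
    by (rule geo_E)
  have "p ^ Suc N = p ^ N * p" by (rule power_Suc2)
  then have "Qn (p ^ Suc N) = (1 - E (of_nat (p ^ N * p))) / (1 - q)" by (simp only: Qn_def)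
  also have "\<dots> = (\<Sum>j<p. E (of_nat (p ^ N * j))) * (1 - E (of_nat (p ^ N))) / (1 - q)" by (simp only: g)
  also have "\<dots> = Qn (p ^ N) * (\<Sum>j<p. E (of_nat (p ^ N * j)))" by (simp only: Qn_def times_divide_eq_right mult.commute)
  finally show ?thesis .
qed

end

context cpqf begin

definition hh :: "nat \<Rightarrow> nat \<Rightarrow> nat \<Rightarrow> 'a" where
  "hh m r y = (if y mod p ^ m = r then f (of_nat y) else 0)"
definition SS :: "nat \<Rightarrow> nat \<Rightarrow> nat \<Rightarrow> 'a" where
  "SS m r N = (\<Sum>y<p ^ N. hh m r y * E (of_nat y))"
definition CC :: "nat \<Rightarrow> nat \<Rightarrow> nat \<Rightarrow> 'a" where
  "CC m r N = SS m r N / Qn (p ^ N)"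
definition Phi :: "nat \<Rightarrow> nat \<Rightarrow> nat \<Rightarrow> 'a" where
  "Phi m r N = (\<Sum>y<p ^ N. if y mod p ^ m = r then E (of_nat y) * fd (of_nat y) else 0)"

lemma mod_shift: "m \<le> N \<Longrightarrow> (s + p ^ N * j) mod p ^ m = s mod p ^ m"
proof -
  assume "m \<le> N"
  then have "p ^ N = p ^ m * p ^ (N - m)" by (simp add: power_add[symmetric])
  then have e: "p ^ N * j = p ^ m * (p ^ (N - m) * j)" by simp
  show ?thesis unfolding e by simp
qed

lemma CC_diff:
  assumes mN: "m \<le> N"
  shows "CC m r (Suc N) - CC m r N =
    (\<Sum>y<p ^ N. if y mod p ^ m = r then E (of_nat y) *
        (\<Sum>j<p. (f (of_nat (y + p ^ N * j)) - f (of_nat y)) * E (of_nat (p ^ N * j))) else 0) / Qn (p ^ Suc N)"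
proof -
  define P where "P = p ^ N"
  define G where "G = (\<Sum>j<p. E (of_nat (P * j)))"
  have QS: "Qn (p ^ Suc N) = Qn P * G" unfolding P_def G_def by (rule Qn_Suc)
  have QSnz: "Qn (p ^ Suc N) \<noteq> 0" by (rule Qn_nz)
  have QPnz: "Qn P \<noteq> 0" unfolding P_def by (rule Qn_nz)
  have Gnz: "G \<noteq> 0" using QS QSnz by auto
  have hsh: "hh m r (y + P * j) = (if y mod p ^ m = r then f (of_nat (y + P * j)) else 0)" for y j
    unfolding hh_def P_def using mod_shift[OF mN] by simp
  have "SS m r (Suc N) = (\<Sum>y<P * p. hh m r y * E (of_nat y))"
    unfolding SS_def P_def by (simp only: power_Suc2)
  also have "\<dots> = (\<Sum>j<p. \<Sum>y<P. hh m r (y + P * j) * E (of_nat (y + P * j)))" by (rule sum_split)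
  also have "\<dots> = (\<Sum>y<P. \<Sum>j<p. hh m r (y + P * j) * E (of_nat y) * E (of_nat (P * j)))"
    by (subst sum.swap) (simp only: E_nat_add mult.assoc)
  finally have S1: "SS m r (Suc N) = \<dots>" .
  have S0: "SS m r N * G = (\<Sum>y<P. \<Sum>j<p. hh m r y * E (of_nat y) * E (of_nat (P * j)))"
    unfolding SS_def G_def P_def[symmetric] sum_distrib_right sum_distrib_left by (subst sum.swap) (simp only: mult.assoc)
  have "CC m r (Suc N) - CC m r N = (SS m r (Suc N) - SS m r N * G) / Qn (p ^ Suc N)"
    unfolding CC_def using QS QPnz Gnz by (simp add: P_def field_simps)
  also have "SS m r (Suc N) - SS m r N * G =
     (\<Sum>y<P. \<Sum>j<p. (hh m r (y + P * j) - hh m r y) * E (of_nat y) * E (of_nat (P * j)))"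
    unfolding S1 S0 by (simp add: sum_subtractf[symmetric] algebra_simps)
  also have "\<dots> = (\<Sum>y<P. if y mod p ^ m = r then E (of_nat y) *
        (\<Sum>j<p. (f (of_nat (y + P * j)) - f (of_nat y)) * E (of_nat (P * j))) else 0)"
  proof (rule sum.cong[OF refl])
    fix y
    show "(\<Sum>j<p. (hh m r (y + P * j) - hh m r y) * E (of_nat y) * E (of_nat (P * j))) =
      (if y mod p ^ m = r then E (of_nat y) * (\<Sum>j<p. (f (of_nat (y + P * j)) - f (of_nat y)) * E (of_nat (P * j))) else 0)"
      unfolding hsh by (simp add: hh_def sum_distrib_left mult_ac)
  qed
  finally show ?thesis unfolding P_def .
qed

lemma E_small: "v (E (of_nat (p ^ N * j)) - 1) \<le> (1 / real p) ^ N"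
proof -
  have "v (E (of_nat (p ^ N * j)) - 1) = v (of_nat (p ^ N * j)) * v lam" by (rule E_v1[OF v_of_nat_le1])
  also have "\<dots> \<le> v (of_nat (p ^ N * j))" using lam_small rho_lt1 by (simp add: mult_left_le)
  also have "\<dots> \<le> (1 / real p) ^ N" by (rule v_mult_ppow)
  finally show ?thesis .
qed

lemma E_nat_v: "v (E (of_nat n)) = 1" by (rule E_v[OF v_of_nat_le1])

lemma CC_diff_bound:
  assumes mN: "m \<le> N" and e: "e \<ge> 0" and B: "\<And>y. v (fd (of_nat y)) \<le> B" "B > 0"
    and A: "\<And>y j. v (f (of_nat (y + p ^ N * j)) - f (of_nat y) - of_nat (p ^ N * j) * fd (of_nat y)) \<le> e * (1 / real p) ^ N"
  shows "v (CC m r (Suc N) - CC m r N) \<le> real p * max (v (Phi m r N)) (max (B * (1 / real p) ^ N) e)"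
proof -
  define nu where "nu = (1 / real p) ^ N"
  have nu0: "nu > 0" unfolding nu_def by (rule nu_pos)
  have nu1: "nu \<le> 1" unfolding nu_def by (rule nu_le1)
  define P where "P = p ^ N"
  define c :: 'a where "c = (\<Sum>j<p. of_nat j)"
  define X where "X y = (\<Sum>j<p. (f (of_nat (y + P * j)) - f (of_nat y)) * E (of_nat (P * j)))" for y
  define D where "D y = X y - of_nat P * c * fd (of_nat y)" for y
  have D_eq: "D y = (\<Sum>j<p. (f (of_nat (y + P * j)) - f (of_nat y) - of_nat (P * j) * fd (of_nat y)) * E (of_nat (P * j))
        + of_nat (P * j) * fd (of_nat y) * (E (of_nat (P * j)) - 1))" for y
  proof -
    have "of_nat P * c * fd (of_nat y) = (\<Sum>j<p. of_nat (P * j) * fd (of_nat y))"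
      unfolding c_def by (simp add: sum_distrib_left sum_distrib_right)
    then show ?thesis unfolding D_def X_def by (simp add: sum_subtractf[symmetric] algebra_simps)
  qed
  have Dv: "v (D y) \<le> nu * max e (B * nu)" for y
  proof -
    have "v ((f (of_nat (y + P * j)) - f (of_nat y) - of_nat (P * j) * fd (of_nat y)) * E (of_nat (P * j))
        + of_nat (P * j) * fd (of_nat y) * (E (of_nat (P * j)) - 1)) \<le> nu * max e (B * nu)" for j
    proof (rule v_add_le)
      have "v ((f (of_nat (y + P * j)) - f (of_nat y) - of_nat (P * j) * fd (of_nat y)) * E (of_nat (P * j)))
           = v (f (of_nat (y + P * j)) - f (of_nat y) - of_nat (P * j) * fd (of_nat y))"
        by (simp only: v_mult E_nat_v mult_1_right)
      also have "\<dots> \<le> e * nu" using A[of y j] unfolding P_def nu_def .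
      also have "\<dots> \<le> nu * max e (B * nu)" using nu0 by (simp add: mult.commute mult_left_mono)
      finally show "v ((f (of_nat (y + P * j)) - f (of_nat y) - of_nat (P * j) * fd (of_nat y)) * E (of_nat (P * j)))
           \<le> nu * max e (B * nu)" .
      have "v (of_nat (P * j) * fd (of_nat y) * (E (of_nat (P * j)) - 1))
          = v (of_nat (P * j)) * v (fd (of_nat y)) * v (E (of_nat (P * j)) - 1)" by (simp add: v_mult)
      also have "\<dots> \<le> nu * B * nu"
        using v_mult_ppow[of N j] B(1)[of y] E_small[of N j] nu0 B(2) unfolding P_def nu_def[symmetric]
        by (intro mult_mono) (auto intro: mult_nonneg_nonneg)
      also have "\<dots> \<le> nu * max e (B * nu)" using nu0 by (simp add: mult.assoc mult_left_mono)
      finally show "v (of_nat (P * j) * fd (of_nat y) * (E (of_nat (P * j)) - 1)) \<le> nu * max e (B * nu)" .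
    qed
    then show ?thesis unfolding D_eq using nu0 e by (intro v_sum_le) auto
  qed
  have Num: "(\<Sum>y<P. if y mod p ^ m = r then E (of_nat y) * X y else 0)
      = of_nat P * c * Phi m r N + (\<Sum>y<P. if y mod p ^ m = r then E (of_nat y) * D y else 0)"
    unfolding Phi_def P_def[symmetric] D_def
    by (simp add: sum_distrib_left sum.distrib[symmetric] algebra_simps if_distrib cong: if_cong)
  have cv: "v c \<le> 1" unfolding c_def by (intro v_sum_le) (auto simp: v_of_nat_le1)
  have vPc: "v (of_nat P * c) \<le> nu" unfolding P_def nu_def v_mult v_ppow using cv nu_pos[of N]
    by (simp add: mult_left_le)
  have "v (\<Sum>y<P. if y mod p ^ m = r then E (of_nat y) * X y else 0) \<le> nu * max (v (Phi m r N)) (max (B * nu) e)"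
    unfolding Num
  proof (rule v_add_le)
    show "v (of_nat P * c * Phi m r N) \<le> nu * max (v (Phi m r N)) (max (B * nu) e)"
      unfolding v_mult[of "of_nat P * c"] using vPc nu0 by (intro mult_mono) auto
    show "v (\<Sum>y<P. if y mod p ^ m = r then E (of_nat y) * D y else 0) \<le> nu * max (v (Phi m r N)) (max (B * nu) e)"
    proof (rule v_sum_le)
      fix y
      have "v (if y mod p ^ m = r then E (of_nat y) * D y else 0) \<le> v (D y)"
        by (simp add: v_mult E_nat_v)
      also have "\<dots> \<le> nu * max e (B * nu)" by (rule Dv)
      also have "\<dots> \<le> nu * max (v (Phi m r N)) (max (B * nu) e)" using nu0 by (intro mult_left_mono) auto
      finally show "v (if y mod p ^ m = r then E (of_nat y) * D y else 0) \<le> nu * max (v (Phi m r N)) (max (B * nu) e)" .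
    qed (use nu0 e in auto)
  qed
  moreover have "v (Qn (p ^ Suc N)) = nu / real p" unfolding nu_def Qn_v by simp
  moreover have "CC m r (Suc N) - CC m r N = (\<Sum>y<P. if y mod p ^ m = r then E (of_nat y) * X y else 0) / Qn (p ^ Suc N)"
    unfolding CC_diff[OF mN] P_def X_def ..
  ultimately have "v (CC m r (Suc N) - CC m r N) \<le> (nu * max (v (Phi m r N)) (max (B * nu) e)) / (nu / real p)"
    using nu0 p_ge2 by (simp only: v_divide) (intro divide_right_mono, simp_all)
  also have "\<dots> = real p * max (v (Phi m r N)) (max (B * nu) e)" using nu0 p_ge2 by simp
  finally show ?thesis unfolding nu_def .
qed

end

context cpqf begin

lemma geo_v: "M \<le> N \<Longrightarrow> v (\<Sum>k<p ^ (N - M). E (of_nat (p ^ M * k))) = (1 / real p) ^ N / (1 / real p) ^ M"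
proof -
  assume MN: "M \<le> N"
  have pp: "p ^ M * p ^ (N - M) = p ^ N" using MN by (simp add: power_add[symmetric])
  have g: "(\<Sum>k<p ^ (N - M). E (of_nat (p ^ M * k))) * (1 - E (of_nat (p ^ M))) = 1 - E (of_nat (p ^ N))"
    using geo_E[where n="p ^ (N - M)" and a="p ^ M"] unfolding pp .
  have v1: "v (1 - E (of_nat (p ^ K))) = (1 / real p) ^ K * v lam" for K
  proof -
    have "v (E (of_nat (p ^ K)) - 1) = v (of_nat (p ^ K)) * v lam" by (rule E_v1[OF v_of_nat_le1])
    then show ?thesis using v_commute[of 1 "E (of_nat (p ^ K))"] by (simp only: v_ppow)
  qed
  define X where "X = v (\<Sum>k<p ^ (N - M). E (of_nat (p ^ M * k)))"
  define a where "a = (1 / real p) ^ N"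
  define b where "b = (1 / real p) ^ M"
  define l where "l = v lam"
  have l0: "l > 0" unfolding l_def using v_pos[OF lam_nz] .
  have b0: "b > 0" unfolding b_def by (rule nu_pos)
  have "X * (b * l) = a * l"
    using arg_cong[OF g, of v] unfolding v_mult v1 X_def a_def b_def l_def .
  then have "(X * b) * l = a * l" by (simp add: mult.assoc)
  then have "X * b = a" using l0 by simp
  then have "X = a / b" using b0 by (simp add: eq_divide_eq)
  then show ?thesis unfolding X_def a_def b_def .
qed

lemma Phi_small:
  assumes e: "e > 0"
  shows "\<exists>N0. \<forall>N\<ge>N0. v (Phi m r N) \<le> e"
proof -
  obtain B where B: "B > 0" "\<And>y. v (fd (of_nat y)) \<le> B" using fd_bound by blast
  obtain d where d: "d > 0" and H: "\<forall>a\<in>Zp v. \<forall>b\<in>Zp v. v (a - b) < d \<longrightarrow> v (fd a - fd b) < e"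
    using fd_cont[OF e] by blast
  obtain M0 where M0: "\<forall>n\<ge>M0. (1 / real p) ^ n < d" using nu_small[OF d] by blast
  define M where "M = max m M0"
  have nuM: "(1 / real p) ^ M < d" using M0 by (simp add: M_def)
  have eM: "e * (1 / real p) ^ M / B > 0" using e B nu_pos[of M] by simp
  obtain N1 where N1: "\<forall>n\<ge>N1. (1 / real p) ^ n < e * (1 / real p) ^ M / B" using nu_small[OF eM] by blast
  show ?thesis
  proof (intro exI[of _ "max M N1"] allI impI)
    fix N assume N: "max M N1 \<le> N"
    have MN: "M \<le> N" and mM: "m \<le> M" using N by (auto simp: M_def)
    define g where "g y = (if y mod p ^ m = r then E (of_nat y) * fd (of_nat y) else 0)" for y
    have pp: "p ^ N = p ^ M * p ^ (N - M)" using MN by (simp add: power_add[symmetric])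
    have "Phi m r N = (\<Sum>k<p ^ (N - M). \<Sum>s<p ^ M. g (s + p ^ M * k))"
      unfolding Phi_def g_def[symmetric] pp by (rule sum_split)
    also have "\<dots> = (\<Sum>s<p ^ M. \<Sum>k<p ^ (N - M). g (s + p ^ M * k))" by (rule sum.swap)
    finally have Ph: "Phi m r N = \<dots>" .
    have GV: "v (\<Sum>k<p ^ (N - M). E (of_nat (p ^ M * k))) = (1 / real p) ^ N / (1 / real p) ^ M"
      by (rule geo_v[OF MN])
    have small: "B * ((1 / real p) ^ N / (1 / real p) ^ M) \<le> e"
    proof -
      define a where "a = (1 / real p) ^ N"
      define b where "b = (1 / real p) ^ M"
      have b0: "b > 0" unfolding b_def by (rule nu_pos)
      have "a < e * b / B" using N1 N unfolding a_def b_def by simp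
      then have "B * a < B * (e * b / B)" using B(1) by (rule mult_strict_left_mono)
      then have "B * a < e * b" using B(1) by simp
      then have "B * a / b < e" using b0 by (simp add: pos_divide_less_eq)
      then show ?thesis unfolding a_def[symmetric] b_def[symmetric] by simp
    qed
    have T: "v (\<Sum>k<p ^ (N - M). g (s + p ^ M * k)) \<le> e" for s
    proof (cases "s mod p ^ m = r")
      case False
      then have "g (s + p ^ M * k) = 0" for k unfolding g_def using mod_shift[OF mM] by simp
      then show ?thesis using e by simp
    next
      case True
      have "g (s + p ^ M * k) = E (of_nat s) * (E (of_nat (p ^ M * k)) * fd (of_nat (s + p ^ M * k)))" for k
      proof -
        have "g (s + p ^ M * k) = E (of_nat (s + p ^ M * k)) * fd (of_nat (s + p ^ M * k))"
          unfolding g_def using mod_shift[OF mM] True by simp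
        then show ?thesis by (simp only: E_nat_add mult.assoc)
      qed
      then have "(\<Sum>k<p ^ (N - M). g (s + p ^ M * k)) = E (of_nat s) *
          (fd (of_nat s) * (\<Sum>k<p ^ (N - M). E (of_nat (p ^ M * k))) +
           (\<Sum>k<p ^ (N - M). E (of_nat (p ^ M * k)) * (fd (of_nat (s + p ^ M * k)) - fd (of_nat s))))"
        by (simp add: sum_distrib_left sum.distrib[symmetric] algebra_simps)
      also have "v \<dots> \<le> e" unfolding v_mult E_nat_v mult_1_left
      proof (rule v_add_le)
        show "v (fd (of_nat s) * (\<Sum>k<p ^ (N - M). E (of_nat (p ^ M * k)))) \<le> e"
          unfolding v_mult GV using B(2)[of s] small
          by (meson mult_right_mono order_trans divide_nonneg_nonneg less_imp_le nu_pos)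
        show "v (\<Sum>k<p ^ (N - M). E (of_nat (p ^ M * k)) * (fd (of_nat (s + p ^ M * k)) - fd (of_nat s))) \<le> e"
        proof (rule v_sum_le)
          fix k
          have "v (of_nat (s + p ^ M * k) - of_nat s) = v (of_nat (p ^ M * k))" by simp
          also have "\<dots> \<le> (1 / real p) ^ M" by (rule v_mult_ppow)
          finally have "v (of_nat (s + p ^ M * k) - of_nat s) < d" using nuM by simp
          then have "v (fd (of_nat (s + p ^ M * k)) - fd (of_nat s)) < e" using H nat_in_Zp by blast
          then show "v (E (of_nat (p ^ M * k)) * (fd (of_nat (s + p ^ M * k)) - fd (of_nat s))) \<le> e"
            by (simp only: v_mult E_nat_v mult_1_left less_imp_le)
        qed (use e in simp)
      qed
      finally show ?thesis .
    qed
    show "v (Phi m r N) \<le> e" unfolding Ph by (rule v_sum_le) (use T e in auto)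
  qed
qed

lemma CC_conv: "\<exists>\<alpha>. vconv v (CC m r) \<alpha>"
proof (rule vconv_cauchy)
  fix e :: real assume e: "e > 0"
  define e1 where "e1 = e / (2 * real p)"
  have e1: "e1 > 0" using e p_ge2 by (simp add: e1_def)
  obtain B where B: "B > 0" "\<And>y. v (fd (of_nat y)) \<le> B" using fd_bound by blast
  obtain N1 where N1: "\<forall>N\<ge>N1. \<forall>y j. v (f (of_nat (y + p ^ N * j)) - f (of_nat y) - of_nat (p ^ N * j) * fd (of_nat y)) \<le> e1 * (1 / real p) ^ N"
    using diff_approx[OF e1] by blast
  obtain N2 where N2: "\<forall>N\<ge>N2. v (Phi m r N) \<le> e1" using Phi_small[OF e1] by blast
  have eB: "e1 / B > 0" using e1 B by simp
  obtain N3 where N3: "\<forall>n\<ge>N3. (1 / real p) ^ n < e1 / B" using nu_small[OF eB] by blast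
  show "\<exists>N. \<forall>n\<ge>N. v (CC m r (Suc n) - CC m r n) < e"
  proof (intro exI[of _ "max m (max N1 (max N2 N3))"] allI impI)
    fix n assume n: "max m (max N1 (max N2 N3)) \<le> n"
    have "v (CC m r (Suc n) - CC m r n) \<le> real p * max (v (Phi m r n)) (max (B * (1 / real p) ^ n) e1)"
      using n N1 B e1 by (intro CC_diff_bound) auto
    also have "max (v (Phi m r n)) (max (B * (1 / real p) ^ n) e1) \<le> e1"
    proof -
      have "B * (1 / real p) ^ n \<le> e1" using N3 n B by (simp add: field_simps less_imp_le)
      then show ?thesis using N2 n by simp
    qed
    then have "real p * max (v (Phi m r n)) (max (B * (1 / real p) ^ n) e1) \<le> real p * e1"
      by (intro mult_left_mono) auto
    also have "real p * e1 < e" using e p_ge2 by (simp add: e1_def)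
    finally show "v (CC m r (Suc n) - CC m r n) < e" .
  qed
qed

definition alpha where "alpha m r = (SOME a. vconv v (CC m r) a)"
lemma alpha: "vconv v (CC m r) (alpha m r)"
  unfolding alpha_def using CC_conv by (rule someI_ex)

lemma CC_start: "r < p ^ m \<Longrightarrow> CC m r m = f (of_nat r) * E (of_nat r) / Qn (p ^ m)"
proof -
  assume r: "r < p ^ m"
  have "SS m r m = (\<Sum>y<p ^ m. if y = r then f (of_nat y) * E (of_nat y) else 0)"
    unfolding SS_def hh_def by (intro sum.cong) auto
  also have "\<dots> = f (of_nat r) * E (of_nat r)" using r by simp
  finally show ?thesis by (simp add: CC_def)
qed

lemma crude:
  "\<exists>K>0. \<exists>N1. \<forall>m\<ge>N1. \<forall>r. v (alpha m r - CC m r m) \<le> K"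
proof -
  obtain B where B: "B > 0" "\<And>y. v (fd (of_nat y)) \<le> B" using fd_bound by blast
  obtain N1 where N1: "\<forall>N\<ge>N1. \<forall>y j. v (f (of_nat (y + p ^ N * j)) - f (of_nat y) - of_nat (p ^ N * j) * fd (of_nat y)) \<le> 1 * (1 / real p) ^ N"
    using diff_approx[of 1] by auto
  define K where "K = real p * (B + 1)"
  have K: "K > 0" using B p_ge2 by (simp add: K_def)
  have step: "v (CC m r (Suc N) - CC m r N) \<le> K" if "N1 \<le> m" "m \<le> N" for m r N
  proof -
    have "v (CC m r (Suc N) - CC m r N) \<le> real p * max (v (Phi m r N)) (max (B * (1 / real p) ^ N) 1)"
      using that N1 B by (intro CC_diff_bound) auto
    also have "max (v (Phi m r N)) (max (B * (1 / real p) ^ N) 1) \<le> B + 1"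
    proof -
      have "v (Phi m r N) \<le> B" unfolding Phi_def
        using B by (intro v_sum_le) (auto simp: v_mult E_nat_v less_imp_le)
      then have a: "v (Phi m r N) \<le> B + 1" by linarith
      have "B * (1 / real p) ^ N \<le> B" using nu_le1[of N] B(1) by (intro mult_left_le) auto
      then have b: "B * (1 / real p) ^ N \<le> B + 1" by linarith
      have c: "1 \<le> B + 1" using B(1) by linarith
      show ?thesis by (intro max.boundedI a b c)
    qed
    then have "real p * max (v (Phi m r N)) (max (B * (1 / real p) ^ N) 1) \<le> real p * (B + 1)"
      by (intro mult_left_mono) auto
    finally show ?thesis by (simp add: K_def)
  qed
  have tele: "v (CC m r (m + k) - CC m r m) \<le> K" if "N1 \<le> m" for m r k
  proof (induction k)
    case 0 then show ?case using K by simp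
  next
    case (Suc k)
    have "v (CC m r (m + Suc k) - CC m r m) \<le> max (v (CC m r (Suc (m + k)) - CC m r (m + k))) (v (CC m r (m + k) - CC m r m))"
      using v_tri[of "CC m r (Suc (m + k))" "CC m r m" "CC m r (m + k)"] by simp
    then show ?case using Suc step[OF that, of "m + k" r] by simp
  qed
  have "v (alpha m r - CC m r m) \<le> K" if "N1 \<le> m" for m r
  proof (rule vconv_bound[OF alpha])
    show "\<forall>\<^sub>F n in sequentially. v (CC m r n - CC m r m) \<le> K"
      using eventually_ge_at_top[of m]
    proof eventually_elim
      case (elim n) then show ?case using tele[OF that, of r "n - m"] by simp
    qed
  qed
  then show ?thesis using K by blast
qed

end

context cpqf begin

lemma qfourier_eq:
  assumes w: "w \<in> roots_C p m"
  shows "qfourier p v q f w = (\<Sum>s<p ^ m. w ^ s * alpha m s)"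
proof -
  have w1: "w ^ (p ^ m) = 1" using w by (simp add: roots_C_def)
  have pm: "0 < p ^ m" using p_ge2 by simp
  have trm: "upow v w (of_nat y) * f (of_nat y) * qpow v q (of_nat y) = (\<Sum>s<p ^ m. w ^ s * (hh m s y * E (of_nat y)))" for y
  proof -
    have "(\<Sum>s<p ^ m. w ^ s * (hh m s y * E (of_nat y))) = (\<Sum>s<p ^ m. if y mod p ^ m = s then w ^ s * (f (of_nat y) * E (of_nat y)) else 0)"
      unfolding hh_def by (intro sum.cong) auto
    also have "\<dots> = w ^ (y mod p ^ m) * (f (of_nat y) * E (of_nat y))" using pm by simp
    also have "w ^ (y mod p ^ m) = w ^ y" by (rule pow_mod[OF w1, symmetric])
    finally show ?thesis using upow_nat[OF w1, of y] by (simp add: E_def mult.assoc)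
  qed
  have seq: "(\<Sum>y<p ^ N. upow v w (of_nat y) * f (of_nat y) * qpow v q (of_nat y)) / qnum v q (of_nat (p ^ N))
       = (\<Sum>s<p ^ m. w ^ s * CC m s N)" for N
  proof -
    have "(\<Sum>y<p ^ N. upow v w (of_nat y) * f (of_nat y) * qpow v q (of_nat y)) = (\<Sum>s<p ^ m. w ^ s * SS m s N)"
      unfolding trm SS_def by (subst sum.swap) (simp add: sum_distrib_left)
    then show ?thesis unfolding qnum_Qn CC_def by (simp add: sum_divide_distrib)
  qed
  have "vconv v (\<lambda>N. \<Sum>s<p ^ m. w ^ s * CC m s N) (\<Sum>s<p ^ m. w ^ s * alpha m s)"
    by (intro vconv_sum vconv_cmult alpha) simp
  then have "vlim v (\<lambda>N. (\<Sum>y<p ^ N. upow v w (of_nat y) * f (of_nat y) * qpow v q (of_nat y)) / qnum v q (of_nat (p ^ N)))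
      = (\<Sum>s<p ^ m. w ^ s * alpha m s)" unfolding seq by (rule vlim_eq)
  then show ?thesis unfolding qfourier_def Iq_def by (simp add: mult.assoc)
qed

lemma T_eq:
  assumes x: "x \<in> Zp v" and r: "r < p ^ m" "v (x - of_nat r) \<le> (1 / real p) ^ m"
  shows "(\<Sum>w\<in>roots_C p m. upow v (inverse w) x * qfourier p v q f w) = of_nat (p ^ m) * alpha m r"
proof -
  have "(\<Sum>w\<in>roots_C p m. upow v (inverse w) x * qfourier p v q f w)
      = (\<Sum>w\<in>roots_C p m. inverse w ^ r * (\<Sum>s<p ^ m. w ^ s * alpha m s))"
    by (intro sum.cong refl) (simp add: qfourier_eq upow_eq[OF root_inv x r(2)])
  also have "\<dots> = (\<Sum>s<p ^ m. alpha m s * (\<Sum>w\<in>roots_C p m. inverse w ^ r * w ^ s))"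
    by (simp add: sum_distrib_left sum_distrib_right mult_ac sum.swap[of _ "roots_C p m"])
  also have "\<dots> = (\<Sum>s<p ^ m. if s = r then alpha m r * of_nat (p ^ m) else 0)"
  proof (intro sum.cong refl)
    fix s assume "s \<in> {..<p ^ m}"
    then have "(s mod p ^ m = r mod p ^ m) = (s = r)" using r(1) by simp
    then show "alpha m s * (\<Sum>w\<in>roots_C p m. inverse w ^ r * w ^ s) = (if s = r then alpha m r * of_nat (p ^ m) else 0)"
      unfolding orth2 by auto
  qed
  also have "\<dots> = of_nat (p ^ m) * alpha m r" using r(1) by (simp add: mult.commute)
  finally show ?thesis .
qed

lemma f_cont:
  assumes x: "x \<in> Zp v" and rr: "\<And>m. v (x - of_nat (rr m)) \<le> (1 / real p) ^ m"
  shows "vconv v (\<lambda>m. f (of_nat (rr m))) (f x)"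
proof -
  obtain d where d: "d > 0" and H: "\<forall>a\<in>Zp v. \<forall>x\<in>Zp v. \<forall>y\<in>Zp v.
      x \<noteq> y \<and> v (x - a) < d \<and> v (y - a) < d \<longrightarrow> v ((f x - f y) / (x - y) - fd a) < 1"
    using fd_prop by (meson zero_less_one)
  obtain M where M: "\<forall>n\<ge>M. (1 / real p) ^ n < d" using nu_small[OF d] by blast
  define c where "c = 1 + v (fd x)"
  show ?thesis unfolding vconv_def
  proof (rule null_cmp)
    show "\<forall>\<^sub>F m in sequentially. v (f (of_nat (rr m)) - f x) \<le> (1 / real p) ^ m * c"
      using eventually_ge_at_top[of M]
    proof eventually_elim
      case (elim m)
      define y :: 'a where "y = of_nat (rr m)"
      have vy: "v (y - x) \<le> (1 / real p) ^ m" using rr[of m] v_commute[of x y] by (simp add: y_def)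
      show ?case
      proof (cases "y = x")
        case True then show ?thesis using nu_pos[of m] by (simp add: y_def[symmetric] c_def)
      next
        case False
        have "v (y - x) < d" using vy M elim by (meson order_le_less_trans)
        then have Q: "v ((f y - f x) / (y - x) - fd x) < 1" using H x nat_in_Zp[of "rr m"] False d
          unfolding y_def by auto
        have "v ((f y - f x) / (y - x)) \<le> v ((f y - f x) / (y - x) - fd x) + v (fd x)"
          using v_triangle[of "(f y - f x) / (y - x) - fd x" "fd x"] by simp
        then have vq: "v ((f y - f x) / (y - x)) \<le> c" using Q unfolding c_def by linarith
        have "f y - f x = (y - x) * ((f y - f x) / (y - x))" using False by simp
        then have "v (f y - f x) = v (y - x) * v ((f y - f x) / (y - x))" by (metis v_mult)
        also have "\<dots> \<le> (1 / real p) ^ m * c" using vy vq by (intro mult_mono) auto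
        finally show ?thesis unfolding y_def .
      qed
    qed
    have "(\<lambda>m. (1 / real p) ^ m * c) \<longlonglongrightarrow> 0 * c" using p_ge2 by (intro tendsto_intros LIMSEQ_power_zero) auto
    then show "(\<lambda>m. (1 / real p) ^ m * c) \<longlonglongrightarrow> 0" by simp
  qed simp
qed

lemma main:
  assumes x: "x \<in> Zp v"
  shows "\<exists>L. vconv v (\<lambda>n. \<Sum>w\<in>roots_C p n. upow v (inverse w) x * qfourier p v q f w) L
             \<and> f x * qpow v q x = plog v q / (q - 1) * L"
proof -
  have "\<forall>m. \<exists>r. r < p ^ m \<and> v (x - of_nat r) \<le> (1 / real p) ^ m" using Zp_residue[OF x] by blast
  from choice[OF this] obtain rr where rr: "\<And>m. rr m < p ^ m" "\<And>m. v (x - of_nat (rr m)) \<le> (1 / real p) ^ m" by blast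
  define L where "L = (f x * E x) * ((q - 1) * inverse lam)"
  have T: "(\<Sum>w\<in>roots_C p n. upow v (inverse w) x * qfourier p v q f w) = of_nat (p ^ n) * alpha n (rr n)" for n
    using T_eq[OF x rr(1) rr(2)] .
  obtain K N1 where K: "K > 0" and N1: "\<forall>m\<ge>N1. \<forall>r. v (alpha m r - CC m r m) \<le> K" using crude by blast
  have A: "vconv v (\<lambda>n. of_nat (p ^ n) * (alpha n (rr n) - CC n (rr n) n)) 0" unfolding vconv_def
  proof (rule null_cmp)
    show "\<forall>\<^sub>F n in sequentially. v (of_nat (p ^ n) * (alpha n (rr n) - CC n (rr n) n) - 0) \<le> (1 / real p) ^ n * K"
      using eventually_ge_at_top[of N1]
    proof eventually_elim
      case (elim n)
      then show ?case using N1 nu_pos[of n] by (simp only: diff_zero v_mult v_ppow) (intro mult_left_mono, auto)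
    qed
    have "(\<lambda>n. (1 / real p) ^ n * K) \<longlonglongrightarrow> 0 * K" using p_ge2 by (intro tendsto_intros LIMSEQ_power_zero) auto
    then show "(\<lambda>n. (1 / real p) ^ n * K) \<longlonglongrightarrow> 0" by simp
  qed simp
  have Bc: "of_nat (p ^ n) * CC n (rr n) n = (f (of_nat (rr n)) * E (of_nat (rr n))) * ((q - 1) * (of_nat (p ^ n) / (E (of_nat (p ^ n)) - 1)))" for n
  proof -
    have e1: "E (of_nat (p ^ n)) - 1 \<noteq> 0" using E_ne1[of "p ^ n"] p_ge2 by simp
    have q1: "1 - q \<noteq> 0" using q_ne by simp
    show ?thesis unfolding CC_start[OF rr(1)] Qn_def using e1 q1
      by (simp add: field_simps)
  qed
  have xle: "v x \<le> 1" using x by (rule Zp_le1)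
  have Ec: "vconv v (\<lambda>n. E (of_nat (rr n))) (E x)" unfolding vconv_def
  proof (rule null_cmp)
    show "\<forall>\<^sub>F n in sequentially. v (E (of_nat (rr n)) - E x) \<le> (1 / real p) ^ n"
    proof (intro always_eventually allI)
      fix n
      have "v (E (of_nat (rr n)) - E x) \<le> v (of_nat (rr n) - x)" using E_cont[OF v_of_nat_le1 xle] .
      also have "\<dots> \<le> (1 / real p) ^ n" using rr(2)[of n] v_commute[of x "of_nat (rr n)"] by simp
      finally show "v (E (of_nat (rr n)) - E x) \<le> (1 / real p) ^ n" .
    qed
    show "(\<lambda>n. (1 / real p) ^ n) \<longlonglongrightarrow> 0" using p_ge2 by (intro LIMSEQ_power_zero) auto
  qed simp
  have Bconv: "vconv v (\<lambda>n. of_nat (p ^ n) * CC n (rr n) n) L"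
    unfolding Bc L_def
    by (intro vconv_mult vconv_cmult f_cont[OF x rr(2)] Ec E_deriv)
  have "vconv v (\<lambda>n. of_nat (p ^ n) * (alpha n (rr n) - CC n (rr n) n) + of_nat (p ^ n) * CC n (rr n) n) (0 + L)"
    by (rule vconv_add[OF A Bconv])
  then have conv: "vconv v (\<lambda>n. \<Sum>w\<in>roots_C p n. upow v (inverse w) x * qfourier p v q f w) L"
    unfolding T by (simp add: algebra_simps)
  have "plog v q / (q - 1) * L = f x * qpow v q x"
    unfolding L_def using lam_nz q_ne by (simp add: lam_def[symmetric] E_def field_simps)
  then show ?thesis using conv by auto
qed

end

theorem proposition1:
  fixes p :: nat and v :: "'a::field \<Rightarrow> real" and q :: 'a and f :: "'a \<Rightarrow> 'a"
  assumes "Cp_field p v"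
    and "v (q - 1) < real p powr (- 1 / (real p - 1))"
    and "q \<noteq> 1"
    and "UD v f"
    and "x \<in> Zp v"
  shows "\<exists>L. vconv v (\<lambda>n. \<Sum>w\<in>roots_C p n. upow v (inverse w) x * qfourier p v q f w) L
             \<and> f x * qpow v q x = plog v q / (q - 1) * L"
proof -
  interpret cpf p v using assms(1) by unfold_locales
  interpret cpqf p v q f
    using assms(2,3,4) by unfold_locales (simp_all add: rho_def)
  show ?thesis using main[OF assms(5)] .
qed


end
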